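(* Fix $k\ge2$. Assume that the distribution of $Z$ is aperiodic (the greatest common divisor of its support is $1$), that $\mathbb{E} Z=\infty$, and that $\mathbb{E}\min_{1\le i\le k} Z^{(i)}<\infty$, where $Z^{(1)},\dots,Z^{(k)}$ are independent copies of $Z$. Then, in the $k$-choice model, $\Lambda_n\to\infty$ almost surely.
   Context: Let $Z$ be a random variable on $\mathbb{N}=\{1,2,3,\dots\}$. Fix $k\ge2$ and let $(Z^{(1)}_n)_{n\ge1},\dots,(Z^{(k)}_n)_{n\ge1}$ be $k$ independent sequences of i.i.d. random variables, all distributed as $Z$ and mutually independent. The $k$-choice model: define $T_n=\{n\}$ for $n\le0$ and $T_n=\{n\}\cup\bigcup_{i=1}^k T_{n-Z^{(i)}_n}$ for $n\ge1$. Let $\mathcal{L}_n=T_n\cap\{0,-1,-2,\dots\}$ and $\Lambda_n=|\mathcal{L}_n|$. *)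

theory Defs
  imports "HOL-Probability.Probability"
begin

text \<open>A sample z assigns to each choice index i and
each time n \<ge> 1 the jump z i n (the value of Z^(i)_n). This is exactly the unfolding of the
recursion T_n = {n} \<union> \<Union>_{i<k} T_{n - Z^(i)_n}, T_m = {m} for m \<le> 0.\<close>

inductive_set kchoice_tree :: "nat \<Rightarrow> (nat \<Rightarrow> nat \<Rightarrow> nat) \<Rightarrow> int \<Rightarrow> int set"
  for k :: nat and z :: "nat \<Rightarrow> nat \<Rightarrow> nat" and n :: int where
  root: "n \<in> kchoice_tree k z n"
| step: "\<lbrakk>m \<in> kchoice_tree k z n; m \<ge> 1; i < k\<rbrakk>
          \<Longrightarrow> m - int (z i (nat m)) \<in> kchoice_tree k z n"

definition kchoice_leaves :: "nat \<Rightarrow> (nat \<Rightarrow> nat \<Rightarrow> nat) \<Rightarrow> int \<Rightarrow> int set" where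
  "kchoice_leaves k z n = kchoice_tree k z n \<inter> {..0}"

definition kchoice_Lambda :: "nat \<Rightarrow> (nat \<Rightarrow> nat \<Rightarrow> nat) \<Rightarrow> int \<Rightarrow> nat" where
  "kchoice_Lambda k z n = card (kchoice_leaves k z n)"

end

theory Submission
  imports Defs
begin


definition smin :: "nat \<Rightarrow> (nat \<Rightarrow> nat \<Rightarrow> nat) \<Rightarrow> nat \<Rightarrow> nat" where
  "smin k z y = Min ((\<lambda>i. z i y) ` {..<k})"

inductive_set mw :: "nat \<Rightarrow> (nat \<Rightarrow> nat \<Rightarrow> nat) \<Rightarrow> int \<Rightarrow> int set"
  for k :: nat and z :: "nat \<Rightarrow> nat \<Rightarrow> nat" and n :: int where
  mw_root: "n \<in> mw k z n"
| mw_step: "\<lbrakk>x \<in> mw k z n; x \<ge> 1\<rbrakk> \<Longrightarrow> x - int (smin k z (nat x)) \<in> mw k z n"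

lemma smin_ex: "k > 0 \<Longrightarrow> \<exists>i<k. z i y = smin k z y"
proof -
  assume "k > 0"
  then have "Min ((\<lambda>i. z i y) ` {..<k}) \<in> (\<lambda>i. z i y) ` {..<k}"
    by (intro Min_in) auto
  then show ?thesis unfolding smin_def by auto
qed

lemma smin_le: "i < k \<Longrightarrow> smin k z y \<le> z i y"
  unfolding smin_def by (intro Min_le) auto

lemma smin_ge: "k > 0 \<Longrightarrow> (\<And>i. i < k \<Longrightarrow> s \<le> z i y) \<Longrightarrow> s \<le> smin k z y"
  unfolding smin_def by (subst Min_ge_iff) auto

lemma tree_le: "x \<in> kchoice_tree k z n \<Longrightarrow> x \<le> n"
  by (induction rule: kchoice_tree.induct) auto

lemma tree_trans0: assumes "m \<in> kchoice_tree k z n" shows "x \<in> kchoice_tree k z m \<Longrightarrow> x \<in> kchoice_tree k z n"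
  by (induction rule: kchoice_tree.induct) (auto intro: kchoice_tree.step assms)

lemma tree_trans: "m \<in> kchoice_tree k z n \<Longrightarrow> kchoice_tree k z m \<subseteq> kchoice_tree k z n"
  using tree_trans0 by blast

lemma tree_sub: "kchoice_tree k z n \<subseteq>
   insert n ((\<lambda>(m,i). m - int (z i (nat m))) ` ({1..n} \<times> {..<k}))"
proof
  fix x assume "x \<in> kchoice_tree k z n"
  then show "x \<in> insert n ((\<lambda>(m,i). m - int (z i (nat m))) ` ({1..n} \<times> {..<k}))"
  proof (induction rule: kchoice_tree.induct)
    case root then show ?case by simp
  next
    case (step m i)
    have "m \<le> n" using step(1) by (rule tree_le)
    then show ?case using step by (auto intro!: image_eqI[where x="(m,i)"])
  qed
qed

lemma tree_finite: "finite (kchoice_tree k z n)"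
  by (rule finite_subset[OF tree_sub]) auto

lemma leaves_finite: "finite (kchoice_leaves k z n)"
  unfolding kchoice_leaves_def using tree_finite by auto

lemma leaves_mono: "m \<in> kchoice_tree k z n \<Longrightarrow> kchoice_leaves k z m \<subseteq> kchoice_leaves k z n"
  unfolding kchoice_leaves_def using tree_trans by blast

lemma Lambda_mono: "m \<in> kchoice_tree k z n \<Longrightarrow> kchoice_Lambda k z m \<le> kchoice_Lambda k z n"
  unfolding kchoice_Lambda_def by (intro card_mono leaves_finite leaves_mono)

lemma tree_lower:
  assumes "\<And>i y. i < k \<Longrightarrow> 1 \<le> y \<Longrightarrow> int y \<le> n \<Longrightarrow> z i y \<le> R" "n \<ge> 1"
  shows "x \<in> kchoice_tree k z n \<Longrightarrow> x \<ge> 1 - int R"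
proof (induction rule: kchoice_tree.induct)
  case root then show ?case using assms by simp
next
  case (step m i)
  have "m \<le> n" using step(1) by (rule tree_le)
  then have "z i (nat m) \<le> R" using step assms(1)[of i "nat m"] by auto
  then show ?case using step by simp
qed

lemma tree_dep:
  assumes "\<And>i y. i < k \<Longrightarrow> 1 \<le> y \<Longrightarrow> int y \<le> n \<Longrightarrow> z i y = z' i y"
  shows "kchoice_tree k z n = kchoice_tree k z' n"
proof -
  have *: "kchoice_tree k z n \<subseteq> kchoice_tree k z' n"
    if h: "\<And>i y. i < k \<Longrightarrow> 1 \<le> y \<Longrightarrow> int y \<le> n \<Longrightarrow> z i y = z' i y" for z z'
  proof
    fix x assume "x \<in> kchoice_tree k z n"
    then show "x \<in> kchoice_tree k z' n"
    proof (induction rule: kchoice_tree.induct)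
      case root then show ?case by (rule kchoice_tree.root)
    next
      case (step m i)
      have "m \<le> n" using step(1) by (rule tree_le)
      then have "z i (nat m) = z' i (nat m)" using step h[of i "nat m"] by auto
      then show ?case using kchoice_tree.step[OF step(4) step(2) step(3)] by simp
    qed
  qed
  show ?thesis using *[of z z'] *[of z' z] assms by (auto intro!: equalityI)
qed

lemma Lambda_dep:
  assumes "\<And>i y. i < k \<Longrightarrow> 1 \<le> y \<Longrightarrow> int y \<le> n \<Longrightarrow> z i y = z' i y"
  shows "kchoice_Lambda k z n = kchoice_Lambda k z' n" "kchoice_leaves k z n = kchoice_leaves k z' n"
  using tree_dep[OF assms] unfolding kchoice_Lambda_def kchoice_leaves_def by auto

lemma mw_le: "x \<in> mw k z n \<Longrightarrow> x \<le> n"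
  by (induction rule: mw.induct) auto

lemma mw_sub_tree: assumes "k > 0" shows "mw k z n \<subseteq> kchoice_tree k z n"
proof
  fix x assume "x \<in> mw k z n"
  then show "x \<in> kchoice_tree k z n"
  proof (induction rule: mw.induct)
    case mw_root then show ?case by (rule kchoice_tree.root)
  next
    case (mw_step x)
    obtain i where "i < k" "z i (nat x) = smin k z (nat x)" using smin_ex[OF assms] by blast
    then show ?case using kchoice_tree.step[OF mw_step(3) mw_step(2) \<open>i<k\<close>] by simp
  qed
qed

lemma mw_trans0: assumes "m \<in> mw k z n" shows "x \<in> mw k z m \<Longrightarrow> x \<in> mw k z n"
  by (induction rule: mw.induct) (auto intro: mw.mw_step assms)

lemma mw_trans: "m \<in> mw k z n \<Longrightarrow> mw k z m \<subseteq> mw k z n"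
  using mw_trans0 by blast

lemma mw_unfold: assumes "n \<ge> 1"
  shows "mw k z n = insert n (mw k z (n - int (smin k z (nat n))))"
proof
  have c: "n - int (smin k z (nat n)) \<in> mw k z n" using mw_step[OF mw_root assms] .
  show "insert n (mw k z (n - int (smin k z (nat n)))) \<subseteq> mw k z n"
    using mw_trans[OF c] mw_root by auto
  show "mw k z n \<subseteq> insert n (mw k z (n - int (smin k z (nat n))))"
  proof
    fix x assume "x \<in> mw k z n"
    then show "x \<in> insert n (mw k z (n - int (smin k z (nat n))))"
    proof (induction rule: mw.induct)
      case mw_root then show ?case by simp
    next
      case (mw_step x)
      then show ?case by (auto intro: mw.mw_root mw.mw_step)
    qed
  qed
qed

lemma mw_nonpos: assumes "n \<le> 0" shows "mw k z n = {n}"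
proof -
  have "x = n" if "x \<in> mw k z n" for x
    using that by (induction rule: mw.induct) (use assms mw_le in auto)
  then show ?thesis using mw_root by auto
qed

lemma mw_dep:
  assumes "\<And>i y. i < k \<Longrightarrow> 1 \<le> y \<Longrightarrow> int y \<le> n \<Longrightarrow> z i y = z' i y"
  shows "mw k z n = mw k z' n"
proof -
  have *: "mw k z n \<subseteq> mw k z' n"
    if h: "\<And>i y. i < k \<Longrightarrow> 1 \<le> y \<Longrightarrow> int y \<le> n \<Longrightarrow> z i y = z' i y" for z z'
  proof
    fix x assume "x \<in> mw k z n"
    then show "x \<in> mw k z' n"
    proof (induction rule: mw.induct)
      case mw_root then show ?case by (rule mw.mw_root)
    next
      case (mw_step x)
      have "x \<le> n" using mw_step(1) by (rule mw_le)
      then have "smin k z (nat x) = smin k z' (nat x)" using mw_step h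
        unfolding smin_def by (intro arg_cong[where f=Min] image_cong) auto
      then show ?case using mw.mw_step[OF mw_step(3) mw_step(2)] by simp
    qed
  qed
  show ?thesis using *[of z z'] *[of z' z] assms by (auto intro!: equalityI)
qed


lemma cover:
  assumes k: "k > 0" and a: "a \<ge> 1"
    and h: "\<And>y::nat. a + L < int y \<Longrightarrow> int y \<le> n \<Longrightarrow> smin k z y \<ge> 1 \<and> int y - int (smin k z y) \<ge> a"
    and n: "n \<ge> a"
  shows "\<exists>x\<in>mw k z n. a \<le> x \<and> x \<le> a + L"
  using h n
proof (induction "nat (n - a)" arbitrary: n rule: less_induct)
  case less
  show ?case
  proof (cases "n \<le> a + L")
    case True then show ?thesis using less.prems mw_root by blast
  next
    case False
    define c where "c = n - int (smin k z (nat n))"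
    have n0: "int (nat n) = n" using less.prems(2) a by auto
    have "a + L < int (nat n)" "int (nat n) \<le> n" using n0 False by auto
    from less.prems(1)[OF this] n0
    have "smin k z (nat n) \<ge> 1 \<and> n - int (smin k z (nat n)) \<ge> a" by simp
    then have c1: "c \<ge> a" "c < n" using False a unfolding c_def by auto
    have "\<exists>x\<in>mw k z c. a \<le> x \<and> x \<le> a + L"
      using c1 less.prems by (intro less.hyps) auto
    moreover have "mw k z c \<subseteq> mw k z n" unfolding c_def
      using mw_step[OF mw_root, of n k z] less.prems(2) a by (intro mw_trans) auto
    ultimately show ?thesis by blast
  qed
qed

definition Vw :: "nat \<Rightarrow> (nat \<Rightarrow> nat \<Rightarrow> nat) \<Rightarrow> int \<Rightarrow> int set" where
  "Vw k z n = {x \<in> mw k z n. x \<ge> 1}"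

definition Wsum :: "nat \<Rightarrow> (nat \<Rightarrow> nat \<Rightarrow> nat) \<Rightarrow> (nat \<Rightarrow> real) \<Rightarrow> int \<Rightarrow> real" where
  "Wsum k z f n = (\<Sum>x\<in>Vw k z n. f (nat x))"

definition Eg :: "nat \<Rightarrow> (nat \<Rightarrow> nat \<Rightarrow> nat) \<Rightarrow> nat \<Rightarrow> int \<Rightarrow> bool" where
  "Eg k z R n = (\<forall>x\<in>mw k z n. x \<ge> 1 \<longrightarrow> (\<forall>i<k. z i (nat x) \<le> nat x + R))"

lemma Vw_finite: "k > 0 \<Longrightarrow> finite (Vw k z n)"
  unfolding Vw_def using mw_sub_tree tree_finite by (metis (no_types, lifting) finite_subset mem_Collect_eq subsetI subset_iff)

lemma Vw_nonpos: "n \<le> 0 \<Longrightarrow> Vw k z n = {}"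
  unfolding Vw_def using mw_nonpos by auto

lemma Wsum_nonpos: "n \<le> 0 \<Longrightarrow> Wsum k z f n = 0"
  unfolding Wsum_def using Vw_nonpos by auto

lemma Eg_nonpos: "n \<le> 0 \<Longrightarrow> Eg k z R n"
  unfolding Eg_def using mw_nonpos by auto

lemma Vw_unfold:
  assumes "n \<ge> 1" "smin k z (nat n) \<ge> 1"
  shows "Vw k z n = insert n (Vw k z (n - int (smin k z (nat n))))"
    "n \<notin> Vw k z (n - int (smin k z (nat n)))"
  using mw_unfold[OF assms(1), of k z] assms mw_le[of n k z "n - int (smin k z (nat n))"]
  unfolding Vw_def by auto

lemma Wsum_unfold:
  assumes "k > 0" "n \<ge> 1" "smin k z (nat n) \<ge> 1"
  shows "Wsum k z f n = f (nat n) + Wsum k z f (n - int (smin k z (nat n)))"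
  unfolding Wsum_def Vw_unfold(1)[OF assms(2,3)]
  using Vw_unfold(2)[OF assms(2,3)] Vw_finite[OF assms(1)] by simp

lemma Eg_unfold:
  assumes "n \<ge> 1"
  shows "Eg k z R n = ((\<forall>i<k. z i (nat n) \<le> nat n + R) \<and> Eg k z R (n - int (smin k z (nat n))))"
  unfolding Eg_def mw_unfold[OF assms, of k z] using assms by auto

lemma Eg_of_leaves:
  assumes k: "k > 0" and h: "\<And>l. l \<in> kchoice_leaves k z n \<Longrightarrow> l \<ge> - int R"
  shows "Eg k z R n"
  unfolding Eg_def
proof (intro ballI impI allI)
  fix x i assume x: "x \<in> mw k z n" "x \<ge> 1" and i: "i < k"
  have xt: "x \<in> kchoice_tree k z n" using mw_sub_tree[OF k] x by auto
  have t: "x - int (z i (nat x)) \<in> kchoice_tree k z n" using kchoice_tree.step[OF xt x(2) i] .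
  show "z i (nat x) \<le> nat x + R"
  proof (cases "x - int (z i (nat x)) \<le> 0")
    case True
    then have "x - int (z i (nat x)) \<in> kchoice_leaves k z n" using t unfolding kchoice_leaves_def by auto
    then have "x - int (z i (nat x)) \<ge> - int R" by (rule h)
    then show ?thesis using x by linarith
  next
    case False then show ?thesis using x by linarith
  qed
qed

lemma walk_point:
  fixes f :: "nat \<Rightarrow> real"
  assumes k: "k > 0" and G: "G \<ge> 1"
    and pos: "\<And>i y. i < k \<Longrightarrow> 1 \<le> y \<Longrightarrow> y \<le> m \<Longrightarrow> z i y \<ge> 1"
    and nD: "\<And>x. Y < x \<Longrightarrow> x \<le> m \<Longrightarrow> smin k z x < x"
    and y: "Y < y" "y \<le> m" "1 \<le> y"
  shows "(\<exists>v\<in>Vw k z (int m). nat v \<le> y \<and> y < nat v + G) \<or>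
         (\<exists>x. y \<le> x \<and> x \<le> m \<and> smin k z x \<ge> x - y + G)"
proof -
  define S where "S = {v\<in>Vw k z (int m). int y \<le> v}"
  have mS: "int m \<in> S" unfolding S_def Vw_def using y mw_root by auto
  have fS: "finite S" unfolding S_def using Vw_finite[OF k] by auto
  define x where "x = Min S"
  have xS: "x \<in> S" unfolding x_def using fS mS by (intro Min_in) auto
  have xmin: "\<And>v. v \<in> S \<Longrightarrow> x \<le> v" unfolding x_def using fS by auto
  have xmw: "x \<in> mw k z (int m)" and x1: "x \<ge> 1" and xy: "int y \<le> x"
    using xS unfolding S_def Vw_def by auto
  have xm: "x \<le> int m" using mw_le[OF xmw] .
  obtain xn where xn: "x = int xn" using x1 by (metis nonneg_int_cases order_trans zero_le_one)
  have sp: "smin k z xn \<ge> 1" using smin_ge[OF k, of 1 z xn] pos[of _ xn] xn x1 xm by auto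
  have sl: "smin k z xn < xn" using nD[of xn] xn xy xm y by auto
  define c where "c = x - int (smin k z xn)"
  have cmw: "c \<in> mw k z (int m)" unfolding c_def using mw_step[OF xmw x1] xn by simp
  have c1: "c \<ge> 1" unfolding c_def using sl xn by auto
  have cV: "c \<in> Vw k z (int m)" unfolding Vw_def using cmw c1 by auto
  have cx: "c < x" unfolding c_def using sp by auto
  have cy: "c < int y" using xmin[of c] cV cx unfolding S_def by force
  show ?thesis
  proof (cases "int y < c + int G")
    case True
    then show ?thesis using cV cy c1 by (intro disjI1 bexI[of _ c]) auto
  next
    case False
    then have "smin k z xn \<ge> xn - y + G" unfolding c_def using xn xy by linarith
    then show ?thesis using xn xy xm by (intro disjI2 exI[of _ xn]) auto
  qed
qed

lemma walk_ineq:
  fixes f :: "nat \<Rightarrow> real"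
  assumes k: "k > 0" and G: "G \<ge> 1" and f: "antimono f" "\<And>y. f y \<ge> 0"
    and pos: "\<And>i y. i < k \<Longrightarrow> 1 \<le> y \<Longrightarrow> y \<le> m \<Longrightarrow> z i y \<ge> 1"
    and nD: "\<And>x. Y < x \<Longrightarrow> x \<le> m \<Longrightarrow> smin k z x < x"
  shows "(\<Sum>y\<in>{1..m}. f y) \<le> (\<Sum>y\<in>{1..Y}. f y) + real G * Wsum k z f (int m)
          + (\<Sum>y\<in>{1..m}. f y * (if \<exists>x. y \<le> x \<and> x \<le> m \<and> smin k z x \<ge> x - y + G then 1 else 0))"
proof -
  let ?V = "Vw k z (int m)"
  let ?B = "\<lambda>y. (if \<exists>x. y \<le> x \<and> x \<le> m \<and> smin k z x \<ge> x - y + G then 1 else 0::real)"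
  let ?C = "\<lambda>y. (\<Sum>v\<in>?V. if nat v \<le> y \<and> y < nat v + G then f (nat v) else 0)"
  have fin: "finite ?V" using Vw_finite[OF k] .
  have pt: "f y \<le> (if y \<le> Y then f y else 0) + ?C y + f y * ?B y" if y: "y \<in> {1..m}" for y
  proof (cases "y \<le> Y")
    case True
    have "0 \<le> ?C y" by (intro sum_nonneg) (auto simp: f)
    moreover have "0 \<le> f y * ?B y" using f by auto
    ultimately show ?thesis using True by simp
  next
    case False
    have wp: "(\<exists>v\<in>Vw k z (int m). nat v \<le> y \<and> y < nat v + G) \<or>
         (\<exists>x. y \<le> x \<and> x \<le> m \<and> smin k z x \<ge> x - y + G)"
      using walk_point[OF k G, of m z Y y] pos nD False y by auto
    have C0: "0 \<le> ?C y" by (intro sum_nonneg) (auto simp: f)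
    have B0: "0 \<le> f y * ?B y" using f by auto
    show ?thesis
    proof (cases "\<exists>v\<in>?V. nat v \<le> y \<and> y < nat v + G")
      case True
      then obtain v where v: "v \<in> ?V" "nat v \<le> y" "y < nat v + G" by blast
      have "f y \<le> f (nat v)" using f(1) v(2) by (auto simp: antimono_def)
      also have "f (nat v) = (if nat v \<le> y \<and> y < nat v + G then f (nat v) else 0)" using v by simp
      also have "\<dots> \<le> ?C y"
        by (rule member_le_sum[OF v(1)]) (auto simp: f fin)
      finally show ?thesis using B0 False by simp
    next
      case nv: False
      then have "\<exists>x. y \<le> x \<and> x \<le> m \<and> smin k z x \<ge> x - y + G" using wp False y by auto
      then show ?thesis using C0 False by simp
    qed
  qed
  have "(\<Sum>y\<in>{1..m}. f y) \<le> (\<Sum>y\<in>{1..m}. (if y \<le> Y then f y else 0) + ?C y + f y * ?B y)"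
    by (intro sum_mono pt)
  also have "\<dots> = (\<Sum>y\<in>{1..m}. (if y \<le> Y then f y else 0)) + (\<Sum>y\<in>{1..m}. ?C y) + (\<Sum>y\<in>{1..m}. f y * ?B y)"
    by (simp add: sum.distrib)
  also have "(\<Sum>y\<in>{1..m}. (if y \<le> Y then f y else 0)) \<le> (\<Sum>y\<in>{1..Y}. f y)"
  proof -
    have "(\<Sum>y\<in>{1..m}. (if y \<le> Y then f y else 0)) = (\<Sum>y\<in>{y\<in>{1..m}. y \<le> Y}. f y)"
      by (rule sum.inter_filter[symmetric]) simp
    also have "\<dots> \<le> (\<Sum>y\<in>{1..Y}. f y)" by (intro sum_mono2) (auto simp: f)
    finally show ?thesis .
  qed
  also have "(\<Sum>y\<in>{1..m}. ?C y) \<le> real G * Wsum k z f (int m)"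
  proof -
    have "(\<Sum>y\<in>{1..m}. ?C y) = (\<Sum>v\<in>?V. \<Sum>y\<in>{1..m}. if nat v \<le> y \<and> y < nat v + G then f (nat v) else 0)"
      by (rule sum.swap)
    also have "\<dots> \<le> (\<Sum>v\<in>?V. real G * f (nat v))"
    proof (intro sum_mono)
      fix v assume "v \<in> ?V"
      have "(\<Sum>y\<in>{1..m}. if nat v \<le> y \<and> y < nat v + G then f (nat v) else 0)
          = (\<Sum>y\<in>{y\<in>{1..m}. nat v \<le> y \<and> y < nat v + G}. f (nat v))"
        by (rule sum.inter_filter[symmetric]) simp
      also have "\<dots> = real (card {y\<in>{1..m}. nat v \<le> y \<and> y < nat v + G}) * f (nat v)" by simp
      also have "\<dots> \<le> real G * f (nat v)"
      proof -
        have "card {y\<in>{1..m}. nat v \<le> y \<and> y < nat v + G} \<le> card {nat v..<nat v + G}"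
          by (intro card_mono) auto
        then show ?thesis using f(2)[of "nat v"] by (intro mult_right_mono) auto
      qed
      finally show "(\<Sum>y\<in>{1..m}. if nat v \<le> y \<and> y < nat v + G then f (nat v) else 0) \<le> real G * f (nat v)" .
    qed
    also have "\<dots> = real G * Wsum k z f (int m)" unfolding Wsum_def by (simp add: sum_distrib_left)
    finally show ?thesis .
  qed
  finally show ?thesis by simp
qed


lemma PiM_all_sets:
  fixes K :: "'i set"
  assumes K: "finite K" and A: "A \<subseteq> space (PiM K (\<lambda>_. count_space (UNIV::nat set)))"
  shows "A \<in> sets (PiM K (\<lambda>_. count_space (UNIV::nat set)))"
proof -
  have sp: "space (PiM K (\<lambda>_. count_space (UNIV::nat set))) = PiE K (\<lambda>_. UNIV)"
    by (simp add: space_PiM)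
  have "countable (PiE K (\<lambda>_. UNIV::nat set))" using K by (intro countable_PiE) auto
  then have cA: "countable A" using A sp by (auto intro: countable_subset)
  have single: "{r} \<in> sets (PiM K (\<lambda>_. count_space (UNIV::nat set)))" if "r \<in> A" for r
  proof -
    have r: "r \<in> PiE K (\<lambda>_. UNIV)" using that A sp by auto
    have "{r} = PiE K (\<lambda>j. {r j})"
      using r by (auto simp: PiE_iff extensional_def fun_eq_iff) metis
    also have "\<dots> \<in> sets (PiM K (\<lambda>_. count_space (UNIV::nat set)))"
      using K by (intro sets_PiM_I_finite) auto
    finally show ?thesis .
  qed
  have "A = (\<Union>r\<in>A. {r})" by auto
  also have "\<dots> \<in> sets (PiM K (\<lambda>_. count_space (UNIV::nat set)))"
    using cA single by (intro sets.countable_UN') auto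
  finally show ?thesis .
qed

lemma PiM_all_meas:
  fixes K :: "'i set" and F :: "('i \<Rightarrow> nat) \<Rightarrow> 'b"
  assumes K: "finite K" and F: "\<And>r. F r \<in> space N"
  shows "F \<in> measurable (PiM K (\<lambda>_. count_space (UNIV::nat set))) N"
proof (rule measurableI)
  fix r show "F r \<in> space N" by (rule F)
next
  fix A assume "A \<in> sets N"
  show "F -` A \<inter> space (PiM K (\<lambda>_. count_space (UNIV::nat set))) \<in> sets (PiM K (\<lambda>_. count_space (UNIV::nat set)))"
    by (rule PiM_all_sets[OF K]) auto
qed

lemma nn_integral_nat_tail:
  assumes X: "X \<in> measurable N (count_space UNIV)"
  shows "(\<integral>\<^sup>+ \<omega>. ennreal (real (X \<omega> :: nat)) \<partial>N) = (\<Sum>d. emeasure N {\<omega>\<in>space N. Suc d \<le> X \<omega>})"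
proof -
  have eq: "ennreal (real x) = (\<Sum>d. indicator {Suc d..} x)" for x :: nat
  proof -
    have "(\<Sum>d. indicator {Suc d..} x :: ennreal) = (\<Sum>d<x. indicator {Suc d..} x)"
      by (rule suminf_finite) (auto simp: indicator_def)
    also have "\<dots> = (\<Sum>d<x. 1)" by (intro sum.cong) (auto simp: indicator_def)
    also have "\<dots> = ennreal (real x)" by (simp add: ennreal_of_nat_eq_real_of_nat)
    finally show ?thesis by simp
  qed
  have "(\<integral>\<^sup>+ \<omega>. ennreal (real (X \<omega>)) \<partial>N) = (\<integral>\<^sup>+ \<omega>. (\<Sum>d. indicator {Suc d..} (X \<omega>)) \<partial>N)"
    by (simp add: eq)
  also have "\<dots> = (\<Sum>d. \<integral>\<^sup>+ \<omega>. indicator {Suc d..} (X \<omega>) \<partial>N)"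
    by (intro nn_integral_suminf measurable_compose[OF X]) auto
  also have "\<dots> = (\<Sum>d. emeasure N {\<omega>\<in>space N. Suc d \<le> X \<omega>})"
  proof (intro suminf_cong)
    fix d
    have "(\<integral>\<^sup>+ \<omega>. indicator {Suc d..} (X \<omega>) \<partial>N) = (\<integral>\<^sup>+ \<omega>. indicator {\<omega>\<in>space N. Suc d \<le> X \<omega>} \<omega> \<partial>N)"
      by (intro nn_integral_cong) (auto simp: indicator_def)
    also have "\<dots> = emeasure N {\<omega>\<in>space N. Suc d \<le> X \<omega>}"
      using X by (intro nn_integral_indicator) measurable
    finally show "(\<integral>\<^sup>+ \<omega>. indicator {Suc d..} (X \<omega>) \<partial>N) = emeasure N {\<omega>\<in>space N. Suc d \<le> X \<omega>}" .
  qed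
  finally show ?thesis .
qed

locale kc = prob_space M for M :: "'a measure" +
  fixes k :: nat and p :: "nat pmf" and Zs :: "nat \<Rightarrow> nat \<Rightarrow> 'a \<Rightarrow> nat"
  assumes k2: "k \<ge> 2" and supp: "0 \<notin> set_pmf p"
  and ind: "indep_vars (\<lambda>_. count_space UNIV) (\<lambda>(i, n). Zs i n) ({..<k} \<times> {1..})"
  and dis: "\<And>i n. i < k \<Longrightarrow> n \<ge> 1 \<Longrightarrow> distr M (count_space UNIV) (Zs i n) = measure_pmf p"
begin

definition zeta :: "'a \<Rightarrow> nat \<Rightarrow> nat \<Rightarrow> nat" where "zeta \<omega> = (\<lambda>i n. Zs i n \<omega>)"

definition dep :: "nat set \<Rightarrow> ((nat \<Rightarrow> nat \<Rightarrow> nat) \<Rightarrow> 'b) \<Rightarrow> bool" where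
  "dep A F = (\<forall>z z'. (\<forall>i<k. \<forall>n\<in>A. z i n = z' i n) \<longrightarrow> F z = F z')"

lemma k0: "k > 0" using k2 by simp

lemma Zs_meas: "i < k \<Longrightarrow> n \<ge> 1 \<Longrightarrow> Zs i n \<in> measurable M (count_space UNIV)"
  using ind unfolding indep_vars_def by auto

abbreviation X where "X \<equiv> (\<lambda>(i, n). Zs i n)"

lemma restr_meas:
  assumes "A \<subseteq> {1..}"
  shows "(\<lambda>\<omega>. restrict (\<lambda>j. X j \<omega>) ({..<k} \<times> A)) \<in> measurable M (PiM ({..<k} \<times> A) (\<lambda>_. count_space UNIV))"
  using assms by (intro measurable_restrict) (auto intro!: Zs_meas)

lemma dep_restr:
  assumes "dep A F"
  shows "F (zeta \<omega>) = F (\<lambda>i n. restrict (\<lambda>j. X j \<omega>) ({..<k} \<times> A) (i, n))"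
  using assms unfolding dep_def zeta_def by (auto intro!: arg_cong[where f=F])

lemma meas_dep:
  assumes A: "finite A" "A \<subseteq> {1..}" and F: "dep A F" and sp: "\<And>z. F z \<in> space N"
  shows "(\<lambda>\<omega>. F (zeta \<omega>)) \<in> measurable M N"
proof -
  have "(\<lambda>\<omega>. (\<lambda>r. F (\<lambda>i n. r (i, n))) (restrict (\<lambda>j. X j \<omega>) ({..<k} \<times> A))) \<in> measurable M N"
    by (rule measurable_compose[OF restr_meas[OF A(2)] PiM_all_meas]) (use A sp in auto)
  then show ?thesis using dep_restr[OF F] by simp
qed

lemma sets_dep:
  assumes A: "finite A" "A \<subseteq> {1..}" and F: "dep A P"
  shows "{\<omega>\<in>space M. P (zeta \<omega>)} \<in> sets M"
proof -
  have "(\<lambda>\<omega>. P (zeta \<omega>)) \<in> measurable M (count_space UNIV)"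
    by (rule meas_dep[OF A F]) auto
  then have "(\<lambda>\<omega>. P (zeta \<omega>)) -` {True} \<inter> space M \<in> sets M" by (rule measurable_sets) auto
  moreover have "(\<lambda>\<omega>. P (zeta \<omega>)) -` {True} \<inter> space M = {\<omega>\<in>space M. P (zeta \<omega>)}" by auto
  ultimately show ?thesis by simp
qed

lemma decouple:
  fixes F G :: "(nat \<Rightarrow> nat \<Rightarrow> nat) \<Rightarrow> ennreal"
  assumes A: "finite A" "A \<subseteq> {1..}" and B: "finite B" "B \<subseteq> {1..}" and AB: "A \<inter> B = {}"
    and F: "dep A F" and G: "dep B G"
  shows "(\<integral>\<^sup>+\<omega>. F (zeta \<omega>) * G (zeta \<omega>) \<partial>M) = (\<integral>\<^sup>+\<omega>. F (zeta \<omega>) \<partial>M) * (\<integral>\<^sup>+\<omega>. G (zeta \<omega>) \<partial>M)"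
proof -
  let ?KA = "{..<k} \<times> A" and ?KB = "{..<k} \<times> B"
  let ?RA = "\<lambda>\<omega>. restrict (\<lambda>j. X j \<omega>) ?KA" and ?RB = "\<lambda>\<omega>. restrict (\<lambda>j. X j \<omega>) ?KB"
  let ?F' = "\<lambda>r. F (\<lambda>i n. r (i, n))" and ?G' = "\<lambda>r. G (\<lambda>i n. r (i, n))"
  have iv: "indep_var (PiM ?KA (\<lambda>_. count_space UNIV)) ?RA (PiM ?KB (\<lambda>_. count_space UNIV)) ?RB"
    using AB A B by (intro indep_var_restrict[OF ind]) auto
  have iv2: "indep_var borel (?F' \<circ> ?RA) borel (?G' \<circ> ?RB)"
    by (rule indep_var_compose[OF iv]) (auto intro!: PiM_all_meas A B)
  have eqF: "\<And>\<omega>. F (zeta \<omega>) = (?F' \<circ> ?RA) \<omega>" using dep_restr[OF F] by simp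
  have eqG: "\<And>\<omega>. G (zeta \<omega>) = (?G' \<circ> ?RB) \<omega>" using dep_restr[OF G] by simp
  have *: "(\<lambda>\<omega>. (?F' \<circ> ?RA) \<omega> * (?G' \<circ> ?RB) \<omega>) = (\<lambda>\<omega>. \<Prod>i\<in>UNIV. (case_bool (?F' \<circ> ?RA) (?G' \<circ> ?RB) i \<omega>))"
    by (simp add: UNIV_bool mult.commute)
  have **: "(\<lambda> _. borel) = case_bool borel borel"
    by (rule ext, metis (full_types) bool.simps(3) bool.simps(4))
  have "(\<integral>\<^sup>+\<omega>. (?F' \<circ> ?RA) \<omega> * (?G' \<circ> ?RB) \<omega> \<partial>M) = (\<Prod>i\<in>UNIV. \<integral>\<^sup>+\<omega>. case_bool (?F' \<circ> ?RA) (?G' \<circ> ?RB) i \<omega> \<partial>M)"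
    apply (subst *)
    apply (rule indep_vars_nn_integral)
      apply simp
     apply (subst **, subst indep_var_def [symmetric], rule iv2)
    apply simp
    done
  also have "\<dots> = (\<integral>\<^sup>+\<omega>. (?F' \<circ> ?RA) \<omega> \<partial>M) * (\<integral>\<^sup>+\<omega>. (?G' \<circ> ?RB) \<omega> \<partial>M)"
    by (simp add: UNIV_bool mult.commute comp_def)
  finally show ?thesis unfolding eqF eqG .
qed

lemma prob_Zs: "i < k \<Longrightarrow> n \<ge> 1 \<Longrightarrow> prob {\<omega>\<in>space M. Zs i n \<omega> \<in> S} = measure p S"
proof -
  assume a: "i < k" "n \<ge> 1"
  have "measure p S = measure (distr M (count_space UNIV) (Zs i n)) S" using dis[OF a] by simp
  also have "\<dots> = prob (Zs i n -` S \<inter> space M)" by (rule measure_distr) (auto intro: Zs_meas a)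
  finally show ?thesis by (simp add: vimage_def Int_def conj_commute)
qed

lemma prob_zero: "i < k \<Longrightarrow> n \<ge> 1 \<Longrightarrow> prob {\<omega>\<in>space M. Zs i n \<omega> = 0} = 0"
  using prob_Zs[of i n "{0}"] supp by (simp add: measure_pmf_single set_pmf_iff)

definition qS :: "nat \<Rightarrow> real" where "qS s = (measure p {s..}) ^ k"

lemma prob_smin: assumes n: "n \<ge> 1"
  shows "prob {\<omega>\<in>space M. s \<le> smin k (zeta \<omega>) n} = qS s"
proof -
  let ?J = "{..<k} \<times> {n}"
  have "{\<omega>\<in>space M. s \<le> smin k (zeta \<omega>) n} = (\<Inter>j\<in>?J. X j -` {s..} \<inter> space M)"
  proof -
    have "s \<le> smin k (zeta \<omega>) n \<longleftrightarrow> (\<forall>i<k. s \<le> Zs i n \<omega>)" for \<omega>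
      using smin_le[of _ k "zeta \<omega>" n] smin_ge[OF k0, of s "zeta \<omega>" n] unfolding zeta_def
      by (meson order_trans)
    then show ?thesis using k0 by auto
  qed
  also have "prob \<dots> = (\<Prod>j\<in>?J. prob (X j -` {s..} \<inter> space M))"
    using n k0 by (intro indep_varsD[OF ind]) auto
  also have "\<dots> = (\<Prod>j\<in>?J. measure p {s..})"
  proof (intro prod.cong refl)
    fix j assume "j \<in> ?J"
    then obtain i where j: "j = (i, n)" "i < k" by auto
    have "X j -` {s..} \<inter> space M = {\<omega>\<in>space M. Zs i n \<omega> \<in> {s..}}" using j by auto
    then show "prob (X j -` {s..} \<inter> space M) = measure p {s..}" using prob_Zs[OF j(2) n, of "{s..}"] by simp
  qed
  also have "\<dots> = qS s" unfolding qS_def by (simp add: card_cartesian_product)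
  finally show ?thesis .
qed

end


context kc begin

lemma dep_mono: "dep A F \<Longrightarrow> A \<subseteq> B \<Longrightarrow> dep B F"
  unfolding dep_def by blast

lemma dep_comb: "dep A F \<Longrightarrow> dep A G \<Longrightarrow> dep A (\<lambda>z. H (F z) (G z))"
  unfolding dep_def by metis

lemma pos_AE: "AE \<omega> in M. \<forall>i<k. \<forall>n\<ge>1. Zs i n \<omega> \<ge> 1"
proof -
  have "AE \<omega> in M. i < k \<longrightarrow> n \<ge> 1 \<longrightarrow> Zs i n \<omega> \<ge> 1" for i n
  proof (cases "i < k \<and> n \<ge> 1")
    case True
    have [measurable]: "Zs i n \<in> measurable M (count_space UNIV)" using True Zs_meas by auto
    have s: "{\<omega>\<in>space M. Zs i n \<omega> = 0} \<in> sets M" by measurable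
    have "emeasure M {\<omega>\<in>space M. Zs i n \<omega> = 0} = 0"
      using prob_zero[of i n] True s by (simp add: emeasure_eq_measure)
    then have "AE \<omega> in M. Zs i n \<omega> \<noteq> 0" using s by (intro AE_I[of _ _ "{\<omega>\<in>space M. Zs i n \<omega> = 0}"]) auto
    then show ?thesis by eventually_elim auto
  qed auto
  then have "\<forall>i. AE \<omega> in M. \<forall>n. i < k \<longrightarrow> n \<ge> 1 \<longrightarrow> Zs i n \<omega> \<ge> 1"
    by (auto simp: AE_all_countable)
  then have "AE \<omega> in M. \<forall>i n. i < k \<longrightarrow> n \<ge> 1 \<longrightarrow> Zs i n \<omega> \<ge> 1"
    by (auto simp: AE_all_countable)
  then show ?thesis by auto
qed

definition fR :: "nat \<Rightarrow> nat \<Rightarrow> real" where "fR R y = measure p {y + R<..}"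

lemma fR_nonneg: "fR R y \<ge> 0" unfolding fR_def by simp

lemma fR_antimono: "antimono (fR R)"
  unfolding fR_def antimono_def by (auto intro!: measure_pmf.finite_measure_mono)

definition Fint :: "nat \<Rightarrow> int \<Rightarrow> (nat \<Rightarrow> nat \<Rightarrow> nat) \<Rightarrow> ennreal" where
  "Fint R c z = (if Eg k z R c then ennreal (exp (Wsum k z (fR R) c)) else 0)"

lemma Fint_nonpos: "c \<le> 0 \<Longrightarrow> Fint R c z = 1"
  unfolding Fint_def by (simp add: Eg_nonpos Wsum_nonpos)

lemma agree_int:
  assumes "\<forall>i<k. \<forall>n\<in>{1..nat c}. z i n = z' i n"
  shows "\<And>i y. i < k \<Longrightarrow> 1 \<le> y \<Longrightarrow> int y \<le> c \<Longrightarrow> z i y = z' i y"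
  using assms by auto

lemma dep_Eg: "dep {1..nat c} (\<lambda>z. Eg k z R c)"
  unfolding dep_def
proof (intro allI impI)
  fix z z' :: "nat \<Rightarrow> nat \<Rightarrow> nat" assume h: "\<forall>i<k. \<forall>n\<in>{1..nat c}. z i n = z' i n"
  have mw: "mw k z c = mw k z' c" by (rule mw_dep[OF agree_int[OF h]])
  show "Eg k z R c = Eg k z' R c" unfolding Eg_def mw
  proof (intro ball_cong refl imp_cong all_cong)
    fix x i assume "x \<in> mw k z' c" "1 \<le> x" "i < k"
    then have "nat x \<in> {1..nat c}" using mw_le[of x k z' c] by auto
    then show "(z i (nat x) \<le> nat x + R) = (z' i (nat x) \<le> nat x + R)" using h \<open>i<k\<close> by auto
  qed
qed

lemma dep_Wsum: "dep {1..nat c} (\<lambda>z. Wsum k z f c)"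
  unfolding dep_def
proof (intro allI impI)
  fix z z' :: "nat \<Rightarrow> nat \<Rightarrow> nat" assume h: "\<forall>i<k. \<forall>n\<in>{1..nat c}. z i n = z' i n"
  have mw: "mw k z c = mw k z' c" by (rule mw_dep[OF agree_int[OF h]])
  show "Wsum k z f c = Wsum k z' f c" unfolding Wsum_def Vw_def mw ..
qed

lemma dep_Fint: "dep {1..nat c} (Fint R c)"
proof -
  have "dep {1..nat c} (\<lambda>z. (\<lambda>b w. if b then ennreal (exp w) else 0) (Eg k z R c) (Wsum k z (fR R) c))"
    by (rule dep_comb[OF dep_Eg dep_Wsum])
  then show ?thesis unfolding Fint_def by simp
qed

lemma meas_Fint: "(\<lambda>\<omega>. Fint R c (zeta \<omega>)) \<in> borel_measurable M"
  by (rule meas_dep[OF _ _ dep_Fint]) auto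

lemma N_bound: "(\<integral>\<^sup>+\<omega>. Fint R c (zeta \<omega>) \<partial>M) \<le> 1"
proof (induction "nat c" arbitrary: c rule: less_induct)
  case less
  show ?case
  proof (cases "c \<le> 0")
    case True
    then show ?thesis by (simp add: Fint_nonpos emeasure_space_1)
  next
    case False
    define m where "m = nat c"
    have cm: "c = int m" "m \<ge> 1" using False by (auto simp: m_def)
    define e where "e = ennreal (exp (fR R m))"
    define a where "a s z = (if 1 \<le> s \<and> smin k z m = s \<and> (\<forall>i<k. z i m \<le> m + R) then e else 0)" for s z
    have dep_a: "dep {m} (a s)" for s
      unfolding dep_def a_def smin_def by (auto intro!: arg_cong[where f=Min] image_cong)
    have pt: "Fint R c z \<le> (\<Sum>s. a s z * Fint R (c - int s) z)"
      if pz: "\<forall>i<k. z i m \<ge> 1" for z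
    proof -
      define s0 where "s0 = smin k z m"
      have s0: "s0 \<ge> 1" unfolding s0_def using smin_ge[OF k0, of 1 z m] pz by auto
      have nm: "nat c = m" "nat (int m) = m" using cm by auto
      have eg: "Eg k z R c = ((\<forall>i<k. z i m \<le> m + R) \<and> Eg k z R (c - int s0))"
        using Eg_unfold[of c k z R] cm unfolding s0_def by simp
      have ws: "Wsum k z (fR R) c = fR R m + Wsum k z (fR R) (c - int s0)"
        using Wsum_unfold[OF k0, of c z "fR R"] cm s0 unfolding s0_def by simp
      have "Fint R c z = (if \<forall>i<k. z i m \<le> m + R then e else 0) * Fint R (c - int s0) z"
        unfolding Fint_def eg ws e_def by (simp add: exp_add ennreal_mult)
      also have "\<dots> = a s0 z * Fint R (c - int s0) z" unfolding a_def s0_def using s0 s0_def by simp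
      also have "\<dots> = (\<Sum>s. a s z * Fint R (c - int s) z)"
        by (subst suminf_finite[of "{s0}"]) (auto simp: a_def s0_def)
      finally show ?thesis by simp
    qed
    have "(\<integral>\<^sup>+\<omega>. Fint R c (zeta \<omega>) \<partial>M) \<le> (\<integral>\<^sup>+\<omega>. (\<Sum>s. a s (zeta \<omega>) * Fint R (c - int s) (zeta \<omega>)) \<partial>M)"
    proof (rule nn_integral_mono_AE)
      show "AE \<omega> in M. Fint R c (zeta \<omega>) \<le> (\<Sum>s. a s (zeta \<omega>) * Fint R (c - int s) (zeta \<omega>))"
        using pos_AE
      proof eventually_elim
        case (elim \<omega>)
        show ?case by (rule pt) (use elim cm in \<open>auto simp: zeta_def\<close>)
      qed
    qed
    also have "\<dots> = (\<Sum>s. \<integral>\<^sup>+\<omega>. a s (zeta \<omega>) * Fint R (c - int s) (zeta \<omega>) \<partial>M)"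
    proof (rule nn_integral_suminf)
      fix s
      have d1: "dep {1..m} (a s)" by (rule dep_mono[OF dep_a]) (use cm in auto)
      have d2: "dep {1..m} (Fint R (c - int s))" by (rule dep_mono[OF dep_Fint]) (use cm in auto)
      have "dep {1..m} (\<lambda>z. a s z * Fint R (c - int s) z)"
        using dep_comb[OF d1 d2, where H="(*)"] by simp
      then show "(\<lambda>\<omega>. a s (zeta \<omega>) * Fint R (c - int s) (zeta \<omega>)) \<in> borel_measurable M"
        by (intro meas_dep[where A="{1..m}"]) auto
    qed
    also have "\<dots> \<le> (\<Sum>s. \<integral>\<^sup>+\<omega>. a s (zeta \<omega>) \<partial>M)"
    proof (intro suminf_le allI)
      fix s
      show "(\<integral>\<^sup>+\<omega>. a s (zeta \<omega>) * Fint R (c - int s) (zeta \<omega>) \<partial>M) \<le> (\<integral>\<^sup>+\<omega>. a s (zeta \<omega>) \<partial>M)"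
      proof (cases "s \<ge> 1")
        case False
        then show ?thesis by (simp add: a_def)
      next
        case True
        have "(\<integral>\<^sup>+\<omega>. a s (zeta \<omega>) * Fint R (c - int s) (zeta \<omega>) \<partial>M)
            = (\<integral>\<^sup>+\<omega>. a s (zeta \<omega>) \<partial>M) * (\<integral>\<^sup>+\<omega>. Fint R (c - int s) (zeta \<omega>) \<partial>M)"
          using True cm
          by (intro decouple[where A="{m}" and B="{1..m-1}"] dep_a dep_mono[OF dep_Fint]) auto
        also have "\<dots> \<le> (\<integral>\<^sup>+\<omega>. a s (zeta \<omega>) \<partial>M) * 1"
          using True cm by (intro mult_left_mono less.hyps) auto
        finally show ?thesis by simp
      qed
    qed auto
    also have "\<dots> = (\<integral>\<^sup>+\<omega>. (\<Sum>s. a s (zeta \<omega>)) \<partial>M)"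
      by (rule nn_integral_suminf[symmetric]) (use cm in \<open>auto intro!: meas_dep[OF _ _ dep_a]\<close>)
    also have "\<dots> \<le> (\<integral>\<^sup>+\<omega>. e * indicator {\<omega>\<in>space M. Zs 0 m \<omega> \<le> m + R} \<omega> \<partial>M)"
    proof (intro nn_integral_mono)
      fix \<omega> assume om: "\<omega> \<in> space M"
      have "(\<Sum>s. a s (zeta \<omega>)) = a (smin k (zeta \<omega>) m) (zeta \<omega>)"
        by (subst suminf_finite[of "{smin k (zeta \<omega>) m}"]) (auto simp: a_def)
      also have "\<dots> \<le> e * indicator {\<omega>\<in>space M. Zs 0 m \<omega> \<le> m + R} \<omega>"
        using om k0 unfolding a_def by (auto simp: zeta_def)
      finally show "(\<Sum>s. a s (zeta \<omega>)) \<le> e * indicator {\<omega>\<in>space M. Zs 0 m \<omega> \<le> m + R} \<omega>" .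
    qed
    also have "\<dots> = e * emeasure M {\<omega>\<in>space M. Zs 0 m \<omega> \<le> m + R}"
    proof -
      have [measurable]: "Zs 0 m \<in> measurable M (count_space UNIV)" using cm k0 Zs_meas by auto
      show ?thesis by (intro nn_integral_cmult_indicator) measurable
    qed
    also have "emeasure M {\<omega>\<in>space M. Zs 0 m \<omega> \<le> m + R} = ennreal (1 - fR R m)"
    proof -
      have "emeasure M {\<omega>\<in>space M. Zs 0 m \<omega> \<le> m + R} = ennreal (measure p {..m+R})"
        using prob_Zs[of 0 m "{..m+R}"] k0 cm by (simp add: emeasure_eq_measure)
      also have "measure p {..m+R} = 1 - fR R m"
        using measure_pmf.prob_compl[of "{m+R<..}" p] unfolding fR_def
        by (simp add: Compl_eq_Diff_UNIV[symmetric] not_less atMost_def greaterThan_def Collect_neg_eq[symmetric])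
      finally show ?thesis .
    qed
    also have "e * ennreal (1 - fR R m) \<le> 1"
    proof -
      have "1 + (- fR R m) \<le> exp (- fR R m)" by (rule exp_ge_add_one_self)
      then have "exp (fR R m) * (1 - fR R m) \<le> exp (fR R m) * exp (- fR R m)"
        by (intro mult_left_mono) auto
      also have "\<dots> = 1" by (simp add: exp_minus)
      finally have "exp (fR R m) * (1 - fR R m) \<le> 1" .
      then show ?thesis unfolding e_def by (simp add: ennreal_mult'[symmetric] ennreal_le_1)
    qed
    finally show ?thesis .
  qed
qed

end


lemma tail_small:
  fixes f :: "nat \<Rightarrow> real"
  assumes "summable f" "e > 0"
  shows "\<exists>G0. \<forall>G\<ge>G0. (\<Sum>j. f (j + G)) < e"
proof -
  have "(\<lambda>n. \<Sum>i<n. f i) \<longlonglongrightarrow> suminf f" by (rule summable_LIMSEQ[OF assms(1)])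
  then have "(\<lambda>n. suminf f - (\<Sum>i<n. f i)) \<longlonglongrightarrow> suminf f - suminf f"
    by (intro tendsto_intros)
  then have "(\<lambda>n. suminf f - (\<Sum>i<n. f i)) \<longlonglongrightarrow> 0" by simp
  then obtain G0 where "\<forall>G\<ge>G0. norm (suminf f - (\<Sum>i<G. f i) - 0) < e"
    using assms(2) LIMSEQ_D by blast
  then show ?thesis using suminf_minus_initial_segment[OF assms(1)] by (auto intro!: exI[of _ G0])
qed

lemma nonsummable_big:
  fixes g :: "nat \<Rightarrow> real"
  assumes ns: "\<not> summable g" and g: "\<And>n. g n \<ge> 0"
  shows "\<exists>n. (\<Sum>i<n. g i) > B"
proof (rule ccontr)
  assume "\<not> (\<exists>n. (\<Sum>i<n. g i) > B)"
  then have "\<And>n. (\<Sum>i<n. g i) \<le> B" by (simp add: not_less)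
  then have "summable g" by (intro summableI_nonneg_bounded[where x=B] g)
  then show False using ns by simp
qed

locale kc2 = kc +
  assumes infinite_mean: "(\<integral>\<^sup>+ x. ennreal (real x) \<partial>measure_pmf p) = \<infinity>"
    and finite_min_mean: "(\<integral>\<^sup>+ \<omega>. ennreal (real (Min ((\<lambda>i. Zs i 1 \<omega>) ` {..<k}))) \<partial>M) < \<infinity>"
begin

lemma qS_nonneg: "qS s \<ge> 0" unfolding qS_def by simp

lemma qS_antimono: "s \<le> t \<Longrightarrow> qS t \<le> qS s"
  unfolding qS_def by (intro power_mono measure_pmf.finite_measure_mono) auto

lemma dep_smin: "dep {n} (\<lambda>z. smin k z n)"
  unfolding dep_def smin_def by (auto intro!: arg_cong[where f=Min] image_cong)

lemma dep_app: "dep A F \<Longrightarrow> dep A (\<lambda>z. H (F z))"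
  unfolding dep_def by metis

lemma summable_qS: "summable qS"
proof -
  have meas: "(\<lambda>\<omega>. smin k (zeta \<omega>) 1) \<in> measurable M (count_space UNIV)"
    by (rule meas_dep[OF _ _ dep_smin]) auto
  have "(\<integral>\<^sup>+ \<omega>. ennreal (real (smin k (zeta \<omega>) 1)) \<partial>M) < \<infinity>"
    using finite_min_mean unfolding smin_def zeta_def by simp
  also have "(\<integral>\<^sup>+ \<omega>. ennreal (real (smin k (zeta \<omega>) 1)) \<partial>M) = (\<Sum>d. emeasure M {\<omega>\<in>space M. Suc d \<le> smin k (zeta \<omega>) 1})"
    by (rule nn_integral_nat_tail[OF meas])
  also have "\<dots> = (\<Sum>d. ennreal (qS (Suc d)))"
  proof (intro suminf_cong)
    fix d
    have "{\<omega>\<in>space M. Suc d \<le> smin k (zeta \<omega>) 1} \<in> sets M"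
      by (rule sets_dep[OF _ _ dep_app[OF dep_smin]]) auto
    then show "emeasure M {\<omega>\<in>space M. Suc d \<le> smin k (zeta \<omega>) 1} = ennreal (qS (Suc d))"
      using prob_smin[of 1 "Suc d"] by (simp add: emeasure_eq_measure)
  qed
  finally have "summable (\<lambda>d. qS (Suc d))"
    by (intro summable_suminf_not_top qS_nonneg) auto
  then show ?thesis using summable_Suc_iff by blast
qed

lemma not_summable_tail: "\<not> summable (\<lambda>d. measure p {d<..})"
proof
  assume s: "summable (\<lambda>d. measure p {d<..})"
  have "(\<integral>\<^sup>+ x. ennreal (real x) \<partial>measure_pmf p) = (\<Sum>d. emeasure (measure_pmf p) {x\<in>space (measure_pmf p). Suc d \<le> x})"
    by (rule nn_integral_nat_tail) auto
  also have "\<dots> = (\<Sum>d. ennreal (measure p {d<..}))"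
    by (intro suminf_cong) (auto simp: measure_pmf.emeasure_eq_measure greaterThan_def Suc_le_eq)
  also have "\<dots> = ennreal (\<Sum>d. measure p {d<..})"
    using s by (intro suminf_ennreal2) auto
  finally show False using infinite_mean by simp
qed

definition Phi :: "nat \<Rightarrow> nat \<Rightarrow> real" where "Phi R m = (\<Sum>y\<in>{1..m}. fR R y)"

lemma Phi_big: "\<exists>m0. \<forall>m\<ge>m0. Phi R m > B"
proof -
  let ?g = "\<lambda>d. measure p {d<..}"
  obtain n where n: "(\<Sum>i<n. ?g i) > B + (\<Sum>i<R+1. ?g i)"
    using nonsummable_big[OF not_summable_tail] by fastforce
  have "Phi R m > B" if m: "m \<ge> n" for m
  proof -
    have "Phi R m = (\<Sum>y\<in>{1..m}. ?g (y + R))" unfolding Phi_def fR_def by simp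
    also have "\<dots> = (\<Sum>d\<in>{1+R..m+R}. ?g d)"
      by (rule sum.shift_bounds_cl_nat_ivl[symmetric])
    also have "\<dots> = (\<Sum>d<m+R+1. ?g d) - (\<Sum>d<R+1. ?g d)"
    proof -
      have e: "{..<m+R+1} = {..<R+1} \<union> {1+R..m+R}" by auto
      have "(\<Sum>d\<in>{..<R+1} \<union> {1+R..m+R}. ?g d) = (\<Sum>d<R+1. ?g d) + (\<Sum>d\<in>{1+R..m+R}. ?g d)"
        by (rule sum.union_disjoint) auto
      then have "(\<Sum>d<m+R+1. ?g d) = (\<Sum>d<R+1. ?g d) + (\<Sum>d\<in>{1+R..m+R}. ?g d)"
        unfolding e .
      then show ?thesis by simp
    qed
    finally have eqP: "Phi R m = (\<Sum>d<m+R+1. ?g d) - (\<Sum>d<R+1. ?g d)" .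
    have "(\<Sum>d<m+R+1. ?g d) \<ge> (\<Sum>d<n. ?g d)"
      using m by (intro sum_mono2) auto
    then show ?thesis using n eqP by linarith
  qed
  then show ?thesis by blast
qed

lemma probAE:
  assumes "AE \<omega> in M. P \<omega>" "B \<in> sets M" "\<And>\<omega>. \<omega> \<in> space M \<Longrightarrow> Q \<omega> \<Longrightarrow> P \<omega> \<Longrightarrow> \<omega> \<in> B"
  shows "prob {\<omega>\<in>space M. Q \<omega>} \<le> prob B"
proof -
  have "emeasure M {\<omega>\<in>space M. Q \<omega>} \<le> emeasure M B"
    using assms(1) by (intro emeasure_mono_AE[OF _ assms(2)]) (auto elim!: AE_mp intro: assms(3))
  then show ?thesis by (simp add: emeasure_eq_measure assms(2))
qed

lemma sum_tail_le:
  fixes f :: "nat \<Rightarrow> real"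
  assumes "summable f" "\<And>n. f n \<ge> 0" "finite S" "S \<subseteq> {N..}"
  shows "sum f S \<le> (\<Sum>j. f (j + N))"
proof -
  have inj: "inj_on (\<lambda>x. x - N) S"
  proof (rule inj_onI)
    fix x y assume xy: "x \<in> S" "y \<in> S" "x - N = y - N"
    have "N \<le> x" "N \<le> y" using assms(4) xy(1,2) by auto
    then show "x = y" using xy(3) by arith
  qed
  have "sum f S = (\<Sum>j\<in>(\<lambda>x. x - N) ` S. f (j + N))"
    using assms(4) by (subst sum.reindex[OF inj]) (auto intro!: sum.cong)
  also have "\<dots> \<le> (\<Sum>j. f (j + N))"
    using assms by (intro sum_le_suminf summable_ignore_initial_segment) auto
  finally show ?thesis .
qed

lemma smin_agree: "\<forall>i<k. \<forall>n\<in>A. z i n = z' i n \<Longrightarrow> x \<in> A \<Longrightarrow> smin k z x = smin k z' x"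
  unfolding smin_def by (auto intro!: arg_cong[where f=Min] image_cong)

lemma sets_smin_ge: "n \<ge> 1 \<Longrightarrow> {\<omega>\<in>space M. s \<le> smin k (zeta \<omega>) n} \<in> sets M"
proof -
  assume n: "n \<ge> 1"
  have d: "dep {n} (\<lambda>z. s \<le> smin k z n)" by (rule dep_app[OF dep_smin])
  show ?thesis by (rule sets_dep[OF _ _ d]) (use n in auto)
qed

definition DY :: "nat \<Rightarrow> nat \<Rightarrow> (nat \<Rightarrow> nat \<Rightarrow> nat) \<Rightarrow> bool" where
  "DY Y m z = (\<exists>x. Y < x \<and> x \<le> m \<and> smin k z x \<ge> x)"

definition BY :: "nat \<Rightarrow> nat \<Rightarrow> nat \<Rightarrow> (nat \<Rightarrow> nat \<Rightarrow> nat) \<Rightarrow> bool" where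
  "BY G m y z = (\<exists>x. y \<le> x \<and> x \<le> m \<and> smin k z x \<ge> x - y + G)"

definition Xs :: "nat \<Rightarrow> nat \<Rightarrow> nat \<Rightarrow> (nat \<Rightarrow> nat \<Rightarrow> nat) \<Rightarrow> real" where
  "Xs R G m z = (\<Sum>y\<in>{1..m}. fR R y * (if BY G m y z then 1 else 0))"

definition posm :: "nat \<Rightarrow> (nat \<Rightarrow> nat \<Rightarrow> nat) \<Rightarrow> bool" where
  "posm m z = (\<forall>i<k. \<forall>y. 1 \<le> y \<and> y \<le> m \<longrightarrow> z i y \<ge> 1)"

lemma posm_AE: "AE \<omega> in M. posm m (zeta \<omega>)"
  using pos_AE by eventually_elim (auto simp: posm_def zeta_def)

lemma dep_DY: "dep {1..m} (DY Y m)"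
  unfolding dep_def DY_def
proof (intro allI impI)
  fix z z' :: "nat \<Rightarrow> nat \<Rightarrow> nat" assume h: "\<forall>i<k. \<forall>n\<in>{1..m}. z i n = z' i n"
  show "(\<exists>x. Y < x \<and> x \<le> m \<and> x \<le> smin k z x) = (\<exists>x. Y < x \<and> x \<le> m \<and> x \<le> smin k z' x)"
  proof -
    have "\<forall>x. Y < x \<and> x \<le> m \<longrightarrow> smin k z x = smin k z' x"
      using smin_agree[where A="{1..m}", OF h] by auto
    then show ?thesis by auto
  qed
qed

lemma BY_dep: "y \<ge> 1 \<Longrightarrow> \<forall>i<k. \<forall>n\<in>{1..m}. z i n = z' i n \<Longrightarrow> BY G m y z = BY G m y z'"
proof -
  assume y: "y \<ge> 1" and h: "\<forall>i<k. \<forall>n\<in>{1..m}. z i n = z' i n"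
  have "\<forall>x. y \<le> x \<and> x \<le> m \<longrightarrow> smin k z x = smin k z' x"
    using smin_agree[where A="{1..m}", OF h] y by auto
  then show ?thesis unfolding BY_def by auto
qed

lemma dep_BY: "y \<ge> 1 \<Longrightarrow> dep {1..m} (BY G m y)"
  unfolding dep_def using BY_dep by blast

lemma dep_Xs: "dep {1..m} (Xs R G m)"
  unfolding dep_def Xs_def
proof (intro allI impI sum.cong refl)
  fix z z' :: "nat \<Rightarrow> nat \<Rightarrow> nat" and y assume h: "\<forall>i<k. \<forall>n\<in>{1..m}. z i n = z' i n" and y: "y \<in> {1..m}"
  then show "fR R y * (if BY G m y z then 1 else 0) = fR R y * (if BY G m y z' then 1 else 0)"
    using BY_dep[of y m z z' G] by simp
qed


lemma prob_DY: "prob {\<omega>\<in>space M. DY Y m (zeta \<omega>)} \<le> (\<Sum>j. qS (j + Suc Y))"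
proof -
  have "{\<omega>\<in>space M. DY Y m (zeta \<omega>)} = (\<Union>x\<in>{Y<..m}. {\<omega>\<in>space M. x \<le> smin k (zeta \<omega>) x})"
    unfolding DY_def by auto
  also have "prob \<dots> \<le> (\<Sum>x\<in>{Y<..m}. prob {\<omega>\<in>space M. x \<le> smin k (zeta \<omega>) x})"
    by (rule measure_UNION_le) (auto intro: sets_smin_ge)
  also have "\<dots> = (\<Sum>x\<in>{Y<..m}. qS x)" by (intro sum.cong refl prob_smin) auto
  also have "\<dots> \<le> (\<Sum>j. qS (j + Suc Y))"
    by (intro sum_tail_le summable_qS qS_nonneg) auto
  finally show ?thesis .
qed

lemma prob_BY: "y \<ge> 1 \<Longrightarrow> prob {\<omega>\<in>space M. BY G m y (zeta \<omega>)} \<le> (\<Sum>j. qS (j + G))"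
proof -
  assume y: "y \<ge> 1"
  have "{\<omega>\<in>space M. BY G m y (zeta \<omega>)} = (\<Union>x\<in>{y..m}. {\<omega>\<in>space M. x - y + G \<le> smin k (zeta \<omega>) x})"
    unfolding BY_def by auto
  also have "prob \<dots> \<le> (\<Sum>x\<in>{y..m}. prob {\<omega>\<in>space M. x - y + G \<le> smin k (zeta \<omega>) x})"
    using y by (intro measure_UNION_le) (auto intro: sets_smin_ge)
  also have "\<dots> = (\<Sum>x\<in>{y..m}. qS (x - y + G))" using y by (intro sum.cong refl prob_smin) auto
  also have "\<dots> = (\<Sum>j\<in>(\<lambda>x. x - y) ` {y..m}. qS (j + G))"
    by (subst sum.reindex) (auto simp: inj_on_def)
  also have "\<dots> \<le> (\<Sum>j. qS (j + G))"
    using summable_qS qS_nonneg by (intro sum_le_suminf summable_ignore_initial_segment) auto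
  finally show ?thesis .
qed

lemma E_Xs: "(\<integral>\<^sup>+\<omega>. ennreal (Xs R G m (zeta \<omega>)) \<partial>M) \<le> ennreal (Phi R m * (\<Sum>j. qS (j + G)))"
proof -
  let ?d = "(\<Sum>j. qS (j + G))"
  have sBY: "\<And>y. y \<in> {1..m} \<Longrightarrow> {\<omega>\<in>space M. BY G m y (zeta \<omega>)} \<in> sets M"
  proof -
    fix y assume y: "y \<in> {1..m}"
    have d: "dep {1..m} (BY G m y)" by (rule dep_BY) (use y in simp)
    show "{\<omega>\<in>space M. BY G m y (zeta \<omega>)} \<in> sets M" by (rule sets_dep[OF _ _ d]) auto
  qed
  have pw: "ennreal (Xs R G m (zeta \<omega>)) = (\<Sum>y\<in>{1..m}. ennreal (fR R y) * indicator {\<omega>\<in>space M. BY G m y (zeta \<omega>)} \<omega>)"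
    if om: "\<omega> \<in> space M" for \<omega>
  proof -
    have "ennreal (Xs R G m (zeta \<omega>)) = (\<Sum>y\<in>{1..m}. ennreal (fR R y * (if BY G m y (zeta \<omega>) then 1 else 0)))"
      unfolding Xs_def by (rule sum_ennreal[symmetric]) (simp add: fR_nonneg)
    also have "\<dots> = (\<Sum>y\<in>{1..m}. ennreal (fR R y) * indicator {\<omega>\<in>space M. BY G m y (zeta \<omega>)} \<omega>)"
      by (intro sum.cong refl) (simp add: indicator_def om)
    finally show ?thesis .
  qed
  have "(\<integral>\<^sup>+\<omega>. ennreal (Xs R G m (zeta \<omega>)) \<partial>M)
      = (\<integral>\<^sup>+\<omega>. (\<Sum>y\<in>{1..m}. ennreal (fR R y) * indicator {\<omega>\<in>space M. BY G m y (zeta \<omega>)} \<omega>) \<partial>M)"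
    by (rule nn_integral_cong) (rule pw)
  also have "\<dots> = (\<Sum>y\<in>{1..m}. \<integral>\<^sup>+\<omega>. ennreal (fR R y) * indicator {\<omega>\<in>space M. BY G m y (zeta \<omega>)} \<omega> \<partial>M)"
  proof (rule nn_integral_sum)
    fix y assume y: "y \<in> {1..m}"
    have [measurable]: "{\<omega>\<in>space M. BY G m y (zeta \<omega>)} \<in> sets M" by (rule sBY[OF y])
    show "(\<lambda>\<omega>. ennreal (fR R y) * indicator {\<omega>\<in>space M. BY G m y (zeta \<omega>)} \<omega>) \<in> borel_measurable M"
      by measurable
  qed
  also have "\<dots> = (\<Sum>y\<in>{1..m}. ennreal (fR R y) * emeasure M {\<omega>\<in>space M. BY G m y (zeta \<omega>)})"
    by (intro sum.cong refl nn_integral_cmult_indicator sBY)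
  also have "\<dots> \<le> (\<Sum>y\<in>{1..m}. ennreal (fR R y) * ennreal ?d)"
  proof (intro sum_mono mult_left_mono)
    fix y assume "y \<in> {1..m}"
    then show "emeasure M {\<omega>\<in>space M. BY G m y (zeta \<omega>)} \<le> ennreal ?d"
      using prob_BY[of y G m] by (auto simp: emeasure_eq_measure intro!: ennreal_leI)
  qed auto
  also have "\<dots> = ennreal (Phi R m * ?d)"
  proof -
    have d0: "?d \<ge> 0" using summable_qS qS_nonneg by (intro suminf_nonneg summable_ignore_initial_segment) auto
    have "(\<Sum>y\<in>{1..m}. ennreal (fR R y) * ennreal ?d) = (\<Sum>y\<in>{1..m}. ennreal (fR R y * ?d))"
      using d0 fR_nonneg by (intro sum.cong refl) (simp add: ennreal_mult)
    also have "\<dots> = ennreal (\<Sum>y\<in>{1..m}. fR R y * ?d)" using d0 fR_nonneg by (simp add: sum_ennreal)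
    finally show ?thesis unfolding Phi_def by (simp add: sum_distrib_right)
  qed
  finally show ?thesis .
qed

lemma prob_Xs:
  assumes "Phi R m > 0"
  shows "prob {\<omega>\<in>space M. Phi R m / 2 \<le> Xs R G m (zeta \<omega>)} \<le> 2 * (\<Sum>j. qS (j + G))"
proof -
  let ?d = "(\<Sum>j. qS (j + G))" and ?S = "{\<omega>\<in>space M. Phi R m / 2 \<le> Xs R G m (zeta \<omega>)}"
  have S: "?S \<in> sets M" by (rule sets_dep[OF _ _ dep_app[OF dep_Xs]]) auto
  have "ennreal (Phi R m / 2) * emeasure M ?S = (\<integral>\<^sup>+\<omega>. ennreal (Phi R m / 2) * indicator ?S \<omega> \<partial>M)"
    using S by (simp add: nn_integral_cmult_indicator)
  also have "\<dots> \<le> (\<integral>\<^sup>+\<omega>. ennreal (Xs R G m (zeta \<omega>)) \<partial>M)"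
    by (intro nn_integral_mono) (auto simp: indicator_def intro!: ennreal_leI)
  also have "\<dots> \<le> ennreal (Phi R m * ?d)" by (rule E_Xs)
  finally have h: "ennreal (Phi R m / 2) * emeasure M ?S \<le> ennreal (Phi R m * ?d)" .
  have "ennreal (Phi R m / 2 * prob ?S) = ennreal (Phi R m / 2) * emeasure M ?S"
    using assms by (subst ennreal_mult) (auto simp: emeasure_eq_measure)
  with h have "ennreal (Phi R m / 2 * prob ?S) \<le> ennreal (Phi R m * ?d)" by simp
  then have "Phi R m / 2 * prob ?S \<le> Phi R m * ?d"
    using assms summable_qS qS_nonneg
    by (subst (asm) ennreal_le_iff) (auto intro!: mult_nonneg_nonneg suminf_nonneg summable_ignore_initial_segment)
  then show ?thesis using assms by (simp add: field_simps)
qed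

end


context kc2 begin

lemma Phi_nonneg: "Phi R m \<ge> 0" unfolding Phi_def by (intro sum_nonneg fR_nonneg)

lemma tail_nonneg: "(\<Sum>j. qS (j + G)) \<ge> 0"
  using summable_qS qS_nonneg by (intro suminf_nonneg summable_ignore_initial_segment) auto

lemma W_small:
  assumes e: "e > 0"
  shows "\<exists>m0. \<forall>m\<ge>m0. prob {\<omega>\<in>space M. Wsum k (zeta \<omega>) (fR R) (int m) < T} \<le> e"
proof -
  obtain G0 where G0: "\<forall>G\<ge>G0. (\<Sum>j. qS (j + G)) < e / 4" using tail_small[OF summable_qS, of "e/4"] e by auto
  define G where "G = max G0 1"
  have G: "G \<ge> 1" "(\<Sum>j. qS (j + G)) < e / 4" using G0 unfolding G_def by auto
  obtain Y where Y: "\<forall>Y'\<ge>Y. (\<Sum>j. qS (j + Y')) < e / 2" using tail_small[OF summable_qS, of "e/2"] e by auto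
  define B where "B = max 0 (2 * (Phi R Y + real G * max T 0))"
  obtain m0 where m0: "\<forall>m\<ge>m0. Phi R m > B" using Phi_big by blast
  have "prob {\<omega>\<in>space M. Wsum k (zeta \<omega>) (fR R) (int m) < T} \<le> e" if m: "m \<ge> m0" for m
  proof -
    have PB: "Phi R m > B" using m0 m by auto
    then have P0: "Phi R m > 0" unfolding B_def by auto
    let ?D = "{\<omega>\<in>space M. DY Y m (zeta \<omega>)}" and ?X = "{\<omega>\<in>space M. Phi R m / 2 \<le> Xs R G m (zeta \<omega>)}"
    have sD: "?D \<in> sets M" by (rule sets_dep[OF _ _ dep_DY]) auto
    have sX: "?X \<in> sets M" by (rule sets_dep[OF _ _ dep_app[OF dep_Xs]]) auto
    have "prob {\<omega>\<in>space M. Wsum k (zeta \<omega>) (fR R) (int m) < T} \<le> prob (?D \<union> ?X)"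
    proof (rule probAE[OF posm_AE[of m]])
      show "?D \<union> ?X \<in> sets M" using sD sX by auto
    next
      fix \<omega> assume om: "\<omega> \<in> space M" and W: "Wsum k (zeta \<omega>) (fR R) (int m) < T" and pz: "posm m (zeta \<omega>)"
      show "\<omega> \<in> ?D \<union> ?X"
      proof (rule ccontr)
        assume "\<omega> \<notin> ?D \<union> ?X"
        then have nD: "\<not> DY Y m (zeta \<omega>)" and nX: "Xs R G m (zeta \<omega>) < Phi R m / 2" using om by auto
        have "Phi R m \<le> Phi R Y + real G * Wsum k (zeta \<omega>) (fR R) (int m) + Xs R G m (zeta \<omega>)"
          unfolding Phi_def Xs_def BY_def
          by (rule walk_ineq[OF k0 G(1) fR_antimono fR_nonneg])
             (use pz nD in \<open>auto simp: posm_def DY_def not_le\<close>)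
        moreover have "real G * Wsum k (zeta \<omega>) (fR R) (int m) \<le> real G * max T 0"
          using W by (intro mult_left_mono) auto
        moreover have "2 * (Phi R Y + real G * max T 0) \<le> B" unfolding B_def by simp
        ultimately show False using nX PB by argo
      qed
    qed
    also have "\<dots> \<le> prob ?D + prob ?X" using sD sX by (rule measure_Un_le)
    also have "prob ?D \<le> e / 2"
    proof -
      have "(\<Sum>j. qS (j + Suc Y)) < e / 2" using Y[rule_format, of "Suc Y"] by (simp del: add_Suc_right)
      then show ?thesis using prob_DY[of Y m] by linarith
    qed
    also have "prob ?X \<le> 2 * (\<Sum>j. qS (j + G))" by (rule prob_Xs[OF P0])
    finally show ?thesis using G(2) by linarith
  qed
  then show ?thesis by blast
qed

lemma Eg_small:
  assumes e: "e > 0"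
  shows "\<exists>m0. \<forall>m\<ge>m0. prob {\<omega>\<in>space M. Eg k (zeta \<omega>) R (int m)} \<le> e"
proof -
  define T where "T = - ln (e / 2)"
  have eT: "exp (- T) = e / 2" unfolding T_def using e by simp
  obtain m0 where m0: "\<forall>m\<ge>m0. prob {\<omega>\<in>space M. Wsum k (zeta \<omega>) (fR R) (int m) < T} \<le> e / 2"
    using W_small[of "e/2" R T] e by auto
  have "prob {\<omega>\<in>space M. Eg k (zeta \<omega>) R (int m)} \<le> e" if m: "m \<ge> m0" for m
  proof -
    let ?E = "{\<omega>\<in>space M. Eg k (zeta \<omega>) R (int m)}"
    let ?A = "{\<omega>\<in>space M. Wsum k (zeta \<omega>) (fR R) (int m) < T}"
    let ?B = "{\<omega>\<in>space M. Eg k (zeta \<omega>) R (int m) \<and> T \<le> Wsum k (zeta \<omega>) (fR R) (int m)}"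
    have sA: "?A \<in> sets M" by (rule sets_dep[OF _ _ dep_app[OF dep_Wsum]]) auto
    have dB: "dep {1..nat (int m)} (\<lambda>z. Eg k z R (int m) \<and> T \<le> Wsum k z (fR R) (int m))"
      using dep_comb[OF dep_Eg[of "int m" R] dep_Wsum[of "int m" "fR R"], where H="\<lambda>a b. a \<and> T \<le> b"] by simp
    have sB: "?B \<in> sets M" by (rule sets_dep[OF _ _ dB]) auto
    have "prob ?E \<le> prob (?A \<union> ?B)" using sA sB by (intro finite_measure_mono) auto
    also have "\<dots> \<le> prob ?A + prob ?B" using sA sB by (rule measure_Un_le)
    also have "prob ?B \<le> e / 2"
    proof -
      have "ennreal (exp T) * emeasure M ?B = (\<integral>\<^sup>+\<omega>. ennreal (exp T) * indicator ?B \<omega> \<partial>M)"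
        using sB by (simp add: nn_integral_cmult_indicator)
      also have "\<dots> \<le> (\<integral>\<^sup>+\<omega>. Fint R (int m) (zeta \<omega>) \<partial>M)"
        by (intro nn_integral_mono) (auto simp: indicator_def Fint_def)
      also have "\<dots> \<le> 1" by (rule N_bound)
      finally have "exp T * prob ?B \<le> 1"
        by (simp add: emeasure_eq_measure ennreal_mult[symmetric] ennreal_le_1)
      then have "prob ?B \<le> 1 / exp T" by (simp add: field_simps)
      also have "1 / exp T = exp (- T)" by (simp add: exp_minus field_simps)
      finally show ?thesis using eT by simp
    qed
    finally show ?thesis using m0 m by force
  qed
  then show ?thesis by blast
qed

lemma leaves_small:
  assumes e: "e > 0"
  shows "\<exists>m0. \<forall>m\<ge>m0. prob {\<omega>\<in>space M. \<forall>l\<in>kchoice_leaves k (zeta \<omega>) (int m). l \<ge> - int R} \<le> e"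
proof -
  obtain m0 where m0: "\<forall>m\<ge>m0. prob {\<omega>\<in>space M. Eg k (zeta \<omega>) R (int m)} \<le> e"
    using Eg_small[OF e] by blast
  have "prob {\<omega>\<in>space M. \<forall>l\<in>kchoice_leaves k (zeta \<omega>) (int m). l \<ge> - int R} \<le> e" if "m \<ge> m0" for m
  proof -
    have "prob {\<omega>\<in>space M. \<forall>l\<in>kchoice_leaves k (zeta \<omega>) (int m). l \<ge> - int R}
        \<le> prob {\<omega>\<in>space M. Eg k (zeta \<omega>) R (int m)}"
      using Eg_of_leaves[OF k0] by (intro finite_measure_mono sets_dep[OF _ _ dep_Eg]) auto
    then show ?thesis using m0 that by force
  qed
  then show ?thesis by blast
qed

end


context kc2 begin

definition CF :: "nat \<Rightarrow> nat \<Rightarrow> nat \<Rightarrow> (nat \<Rightarrow> nat \<Rightarrow> nat) \<Rightarrow> bool" where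
  "CF a L m z = (\<exists>y. a + L < y \<and> y \<le> m \<and> smin k z y \<ge> y - a + 1)"

lemma dep_CF: "dep {1..m} (CF a L m)"
  unfolding dep_def
proof (intro allI impI)
  fix z z' :: "nat \<Rightarrow> nat \<Rightarrow> nat" assume h: "\<forall>i<k. \<forall>n\<in>{1..m}. z i n = z' i n"
  have "\<forall>y. a + L < y \<and> y \<le> m \<longrightarrow> smin k z y = smin k z' y"
    using smin_agree[where A="{1..m}", OF h] by auto
  then show "CF a L m z = CF a L m z'" unfolding CF_def by auto
qed

lemma sets_CF: "{\<omega>\<in>space M. CF a L m (zeta \<omega>)} \<in> sets M"
  by (rule sets_dep[OF _ _ dep_CF]) auto

lemma CF_mono: "m \<le> m' \<Longrightarrow> CF a L m z \<Longrightarrow> CF a L m' z"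
  unfolding CF_def by auto

lemma prob_CF: "prob {\<omega>\<in>space M. CF a L m (zeta \<omega>)} \<le> (\<Sum>j. qS (j + (L + 2)))"
proof -
  have "{\<omega>\<in>space M. CF a L m (zeta \<omega>)} = (\<Union>y\<in>{a+L<..m}. {\<omega>\<in>space M. y - a + 1 \<le> smin k (zeta \<omega>) y})"
    unfolding CF_def by auto
  also have "prob \<dots> \<le> (\<Sum>y\<in>{a+L<..m}. prob {\<omega>\<in>space M. y - a + 1 \<le> smin k (zeta \<omega>) y})"
    by (rule measure_UNION_le) (auto intro: sets_smin_ge)
  also have "\<dots> = (\<Sum>y\<in>{a+L<..m}. qS (y - a + 1))" by (intro sum.cong refl prob_smin) auto
  also have "\<dots> = (\<Sum>j\<in>(\<lambda>y. y - a + 1) ` {a+L<..m}. qS j)"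
  proof (rule sum.reindex[symmetric, unfolded comp_def])
    show "inj_on (\<lambda>y. y - a + 1) {a + L<..m}"
    proof (rule inj_onI)
      fix x y assume xy: "x \<in> {a + L<..m}" "y \<in> {a + L<..m}" "x - a + 1 = y - a + 1"
      then show "x = y" by auto
    qed
  qed
  also have "\<dots> \<le> (\<Sum>j. qS (j + (L + 2)))"
    by (rule sum_tail_le[OF summable_qS qS_nonneg]) auto
  finally show ?thesis .
qed

definition BJ :: "nat \<Rightarrow> nat \<Rightarrow> (nat \<Rightarrow> nat \<Rightarrow> nat) \<Rightarrow> bool" where
  "BJ R n z = (\<exists>i<k. \<exists>y. 1 \<le> y \<and> y \<le> n \<and> z i y > R)"

lemma dep_BJ: "dep {1..n} (BJ R n)"
  unfolding dep_def
proof (intro allI impI)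
  fix z z' :: "nat \<Rightarrow> nat \<Rightarrow> nat" assume h: "\<forall>i<k. \<forall>n'\<in>{1..n}. z i n' = z' i n'"
  have e: "\<And>i y. i < k \<Longrightarrow> 1 \<le> y \<Longrightarrow> y \<le> n \<Longrightarrow> z i y = z' i y" using h by simp
  show "BJ R n z = BJ R n z'" unfolding BJ_def
  proof
    assume "\<exists>i<k. \<exists>y. 1 \<le> y \<and> y \<le> n \<and> R < z i y"
    then obtain i y where iy: "i < k" "1 \<le> y" "y \<le> n" "R < z i y" by blast
    show "\<exists>i<k. \<exists>y. 1 \<le> y \<and> y \<le> n \<and> R < z' i y"
      by (intro exI[of _ i] exI[of _ y]) (use iy e[OF iy(1-3)] in auto)
  next
    assume "\<exists>i<k. \<exists>y. 1 \<le> y \<and> y \<le> n \<and> R < z' i y"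
    then obtain i y where iy: "i < k" "1 \<le> y" "y \<le> n" "R < z' i y" by blast
    show "\<exists>i<k. \<exists>y. 1 \<le> y \<and> y \<le> n \<and> R < z i y"
      by (intro exI[of _ i] exI[of _ y]) (use iy e[OF iy(1-3)] in auto)
  qed
qed

lemma prob_BJ: "prob {\<omega>\<in>space M. BJ R n (zeta \<omega>)} \<le> real (k * n) * measure p {R<..}"
proof -
  have "{\<omega>\<in>space M. BJ R n (zeta \<omega>)} = (\<Union>j\<in>{..<k} \<times> {1..n}. {\<omega>\<in>space M. Zs (fst j) (snd j) \<omega> \<in> {R<..}})"
    unfolding BJ_def zeta_def by force
  also have "prob \<dots> \<le> (\<Sum>j\<in>{..<k} \<times> {1..n}. prob {\<omega>\<in>space M. Zs (fst j) (snd j) \<omega> \<in> {R<..}})"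
  proof (rule measure_UNION_le)
    fix j assume j: "j \<in> {..<k} \<times> {1..n}"
    have ms: "Zs (fst j) (snd j) \<in> measurable M (count_space UNIV)" using j Zs_meas by auto
    have eq: "{\<omega>\<in>space M. Zs (fst j) (snd j) \<omega> \<in> {R<..}} = Zs (fst j) (snd j) -` {R<..} \<inter> space M" by auto
    show "{\<omega>\<in>space M. Zs (fst j) (snd j) \<omega> \<in> {R<..}} \<in> sets M"
      unfolding eq by (rule measurable_sets[OF ms]) auto
  qed auto
  also have "\<dots> = (\<Sum>j\<in>{..<k} \<times> {1..n}. measure p {R<..})"
    by (intro sum.cong refl prob_Zs) auto
  also have "\<dots> = real (k * n) * measure p {R<..}" by simp
  finally show ?thesis .
qed

lemma tailp_small: "e > 0 \<Longrightarrow> \<exists>R0. \<forall>R\<ge>R0. measure p {R<..} < e"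
proof -
  assume e: "e > 0"
  have "(\<lambda>R. measure p {R<..}) \<longlonglongrightarrow> measure p (\<Inter>R. {R<..})"
    by (rule measure_pmf.finite_Lim_measure_decseq) (auto simp: decseq_def)
  moreover have "(\<Inter>R. {(R::nat)<..}) = {}" by auto
  ultimately have "(\<lambda>R. measure p {R<..}) \<longlonglongrightarrow> 0" by simp
  then obtain R0 where "\<forall>R\<ge>R0. norm (measure p {R<..} - 0) < e" using e LIMSEQ_D by blast
  then show ?thesis by auto
qed

lemma agree_x: "\<forall>i<k. \<forall>n\<in>{1..x}. z i n = z' i n \<Longrightarrow> (\<And>i y. i < k \<Longrightarrow> 1 \<le> y \<Longrightarrow> int y \<le> int x \<Longrightarrow> z i y = z' i y)"
  by simp

lemma dep_Lam: "dep {1..x} (\<lambda>z. kchoice_Lambda k z (int x))"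
  unfolding dep_def
proof (intro allI impI)
  fix z z' :: "nat \<Rightarrow> nat \<Rightarrow> nat" assume h: "\<forall>i<k. \<forall>n\<in>{1..x}. z i n = z' i n"
  show "kchoice_Lambda k z (int x) = kchoice_Lambda k z' (int x)"
    by (rule Lambda_dep(1)) (use h in auto)
qed

lemma dep_leaves: "dep {1..x} (\<lambda>z. kchoice_leaves k z (int x))"
  unfolding dep_def
proof (intro allI impI)
  fix z z' :: "nat \<Rightarrow> nat \<Rightarrow> nat" assume h: "\<forall>i<k. \<forall>n\<in>{1..x}. z i n = z' i n"
  show "kchoice_leaves k z (int x) = kchoice_leaves k z' (int x)"
    by (rule Lambda_dep(2)) (use h in auto)
qed

lemma sets_Lam: "{\<omega>\<in>space M. kchoice_Lambda k (zeta \<omega>) (int x) < N} \<in> sets M"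
proof -
  have d: "dep {1..x} (\<lambda>z. kchoice_Lambda k z (int x) < N)" by (rule dep_app[OF dep_Lam])
  show ?thesis by (rule sets_dep[OF _ _ d]) auto
qed

lemma sets_leaves: "{\<omega>\<in>space M. \<forall>l\<in>kchoice_leaves k (zeta \<omega>) (int x). l \<ge> - int R} \<in> sets M"
proof -
  have d: "dep {1..x} (\<lambda>z. \<forall>l\<in>kchoice_leaves k z (int x). l \<ge> - int R)" by (rule dep_app[OF dep_leaves])
  show ?thesis by (rule sets_dep[OF _ _ d]) auto
qed

lemma sets_BJ: "{\<omega>\<in>space M. BJ R n (zeta \<omega>)} \<in> sets M"
  by (rule sets_dep[OF _ _ dep_BJ]) auto

lemma cover_Lam:
  assumes a: "a \<ge> 1" and pos: "\<forall>i<k. \<forall>y. 1 \<le> y \<and> y \<le> m \<longrightarrow> z i y \<ge> 1"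
    and nCF: "\<not> CF a L m z" and m: "m \<ge> a"
  shows "\<exists>x. a \<le> x \<and> x \<le> a + L \<and> int x \<in> kchoice_tree k z (int m)"
proof -
  have "\<exists>x\<in>mw k z (int m). int a \<le> x \<and> x \<le> int a + int L"
  proof (rule cover[OF k0])
    show "1 \<le> int a" using a by simp
    show "int a \<le> int m" using m by simp
    fix y :: nat assume y: "int a + int L < int y" "int y \<le> int m"
    have s1: "smin k z y \<ge> 1" using smin_ge[OF k0, of 1 z y] pos y by auto
    have "\<not> smin k z y \<ge> y - a + 1" using nCF y unfolding CF_def by auto
    then show "1 \<le> smin k z y \<and> int a \<le> int y - int (smin k z y)" using s1 y by auto
  qed
  then obtain x where x: "x \<in> mw k z (int m)" "int a \<le> x" "x \<le> int a + int L" by blast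
  then have "x \<in> kchoice_tree k z (int m)" using mw_sub_tree[OF k0] by auto
  then show ?thesis using x by (intro exI[of _ "nat x"]) auto
qed

lemma step_det:
  assumes a: "a \<ge> 1" and pos: "\<forall>i<k. \<forall>y. 1 \<le> y \<and> y \<le> m \<longrightarrow> z i y \<ge> 1"
    and nCF: "\<not> CF a L m z" and m: "m \<ge> a"
    and big: "\<forall>x\<in>{a..a+L}. kchoice_Lambda k z (int x) \<ge> N"
    and nBJ: "\<not> BJ R (a + L) z"
    and l: "l \<in> kchoice_leaves k z (int m)" "l < - int R"
  shows "kchoice_Lambda k z (int m) \<ge> Suc N"
proof -
  obtain x where x: "a \<le> x" "x \<le> a + L" "int x \<in> kchoice_tree k z (int m)"
    using cover_Lam[OF a pos nCF m] by blast
  have sub: "kchoice_leaves k z (int x) \<subseteq> kchoice_leaves k z (int m)" by (rule leaves_mono[OF x(3)])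
  have lb: "\<And>w. w \<in> kchoice_tree k z (int x) \<Longrightarrow> w \<ge> 1 - int R"
  proof -
    fix w assume w: "w \<in> kchoice_tree k z (int x)"
    show "w \<ge> 1 - int R"
    proof (rule tree_lower[OF _ _ w])
      fix i y assume iy: "i < k" "1 \<le> y" "int y \<le> int x"
      have yx: "y \<le> a + L" using iy(3) x(2) by linarith
      show "z i y \<le> R" using nBJ iy(1,2) yx unfolding BJ_def by (meson not_le)
    qed (use x a in auto)
  qed
  have lnot: "l \<notin> kchoice_leaves k z (int x)"
    using lb l(2) unfolding kchoice_leaves_def by force
  have "Suc N \<le> Suc (card (kchoice_leaves k z (int x)))"
    using big x unfolding kchoice_Lambda_def by auto
  also have "\<dots> = card (insert l (kchoice_leaves k z (int x)))"
    using lnot leaves_finite by simp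
  also have "\<dots> \<le> card (kchoice_leaves k z (int m))"
    using sub l(1) leaves_finite by (intro card_mono) auto
  finally show ?thesis unfolding kchoice_Lambda_def .
qed

definition Q :: "nat \<Rightarrow> bool" where
  "Q N = (\<forall>e>0. \<exists>a\<ge>1. \<forall>x\<ge>a. prob {\<omega>\<in>space M. kchoice_Lambda k (zeta \<omega>) (int x) < N} \<le> e)"

lemma Q0: "Q 0" unfolding Q_def by auto

lemma Qstep:
  assumes QN: "Q N"
  shows "Q (Suc N)"
  unfolding Q_def
proof (intro allI impI)
  fix e :: real assume e: "e > 0"
  obtain L where L0: "\<forall>G\<ge>L. (\<Sum>j. qS (j + G)) < e / 4"
    using tail_small[OF summable_qS, of "e/4"] e by auto
  have L: "(\<Sum>j. qS (j + (L + 2))) < e / 4" using L0[rule_format, of "L + 2"] by (simp only: le_add1)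
  define e' where "e' = e / (4 * (real L + 1))"
  have e'0: "e' > 0" unfolding e'_def using e by auto
  obtain a0 where a0: "a0 \<ge> 1" "\<forall>x\<ge>a0. prob {\<omega>\<in>space M. kchoice_Lambda k (zeta \<omega>) (int x) < N} \<le> e'"
    using QN e'0 unfolding Q_def by blast
  define a where "a = a0"
  define X where "X = real (k * (a + L))"
  have h2: "0 < X + 1" unfolding X_def by (rule add_nonneg_pos) simp_all
  have epos: "e / (4 * (X + 1)) > 0"
  proof -
    show ?thesis using e h2 by (intro divide_pos_pos mult_pos_pos) simp_all
  qed
  obtain R0 where R0: "\<forall>R\<ge>R0. measure p {R<..} < e / (4 * (X + 1))"
    using tailp_small[OF epos] by blast
  define R where "R = R0"
  have R: "measure p {R<..} < e / (4 * (X + 1))" using R0 unfolding R_def by simp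
  have RB: "real (k * (a + L)) * measure p {R<..} \<le> e / 4"
  proof -
    have "X * measure p {R<..} \<le> (X + 1) * measure p {R<..}"
      by (intro mult_right_mono) auto
    also have "\<dots> \<le> (X + 1) * (e / (4 * (X + 1)))"
      using R h2 by (intro mult_left_mono) auto
    also have "\<dots> = e / 4" using h2 by (simp add: field_simps)
    finally show ?thesis by (simp add: X_def)
  qed
  obtain m0 where m0: "\<forall>m\<ge>m0. prob {\<omega>\<in>space M. \<forall>l\<in>kchoice_leaves k (zeta \<omega>) (int m). l \<ge> - int R} \<le> e / 4"
    using leaves_small[of "e/4" R] e by auto
  define a' where "a' = max m0 (a + L + 1)"
  have "\<forall>x\<ge>a'. prob {\<omega>\<in>space M. kchoice_Lambda k (zeta \<omega>) (int x) < Suc N} \<le> e"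
  proof (intro allI impI)
    fix x assume x: "a' \<le> x"
    let ?C = "{\<omega>\<in>space M. CF a L x (zeta \<omega>)}"
    let ?U = "(\<Union>y\<in>{a..a+L}. {\<omega>\<in>space M. kchoice_Lambda k (zeta \<omega>) (int y) < N})"
    let ?B = "{\<omega>\<in>space M. BJ R (a + L) (zeta \<omega>)}"
    let ?E = "{\<omega>\<in>space M. \<forall>l\<in>kchoice_leaves k (zeta \<omega>) (int x). l \<ge> - int R}"
    have sU: "?U \<in> sets M" using sets_Lam by auto
    have "prob {\<omega>\<in>space M. kchoice_Lambda k (zeta \<omega>) (int x) < Suc N} \<le> prob (((?C \<union> ?U) \<union> ?B) \<union> ?E)"
    proof (rule probAE[OF posm_AE[of x]])
      show "((?C \<union> ?U) \<union> ?B) \<union> ?E \<in> sets M" using sets_CF sU sets_BJ sets_leaves by auto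
    next
      fix \<omega> assume om: "\<omega> \<in> space M" and lt: "kchoice_Lambda k (zeta \<omega>) (int x) < Suc N"
        and pz: "posm x (zeta \<omega>)"
      show "\<omega> \<in> ((?C \<union> ?U) \<union> ?B) \<union> ?E"
      proof (rule ccontr)
        assume "\<omega> \<notin> ((?C \<union> ?U) \<union> ?B) \<union> ?E"
        then have nC: "\<not> CF a L x (zeta \<omega>)" and nU: "\<forall>y\<in>{a..a+L}. kchoice_Lambda k (zeta \<omega>) (int y) \<ge> N"
          and nB: "\<not> BJ R (a + L) (zeta \<omega>)" and nE: "\<exists>l\<in>kchoice_leaves k (zeta \<omega>) (int x). l < - int R"
          using om by (auto simp: not_le not_less)
        obtain l where l: "l \<in> kchoice_leaves k (zeta \<omega>) (int x)" "l < - int R" using nE by blast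
        have "kchoice_Lambda k (zeta \<omega>) (int x) \<ge> Suc N"
          by (rule step_det[OF _ _ nC _ nU nB l]) (use a0 pz x in \<open>auto simp: a_def a'_def posm_def\<close>)
        then show False using lt by simp
      qed
    qed
    also have "\<dots> \<le> prob ((?C \<union> ?U) \<union> ?B) + prob ?E"
      using sets_CF sU sets_BJ sets_leaves by (intro measure_Un_le) auto
    also have "prob ((?C \<union> ?U) \<union> ?B) \<le> prob (?C \<union> ?U) + prob ?B"
      using sets_CF sU sets_BJ by (intro measure_Un_le) auto
    also have "prob (?C \<union> ?U) \<le> prob ?C + prob ?U"
      using sets_CF sU by (intro measure_Un_le) auto
    also have "prob ?U \<le> (\<Sum>y\<in>{a..a+L}. prob {\<omega>\<in>space M. kchoice_Lambda k (zeta \<omega>) (int y) < N})"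
      using sets_Lam by (intro measure_UNION_le) auto
    also have "\<dots> \<le> (\<Sum>y\<in>{a..a+L}. e')"
      using a0 by (intro sum_mono) (auto simp: a_def)
    also have "\<dots> = (real L + 1) * e'" by simp
    also have "\<dots> = e / 4" unfolding e'_def by (simp add: field_simps)
    also have "prob ?C \<le> e / 4" using prob_CF[of a L x] L by linarith
    also have "prob ?B \<le> e / 4" using prob_BJ[of R "a + L"] RB by linarith
    also have "prob ?E \<le> e / 4" using m0 x unfolding a'_def by auto
    finally show "prob {\<omega>\<in>space M. kchoice_Lambda k (zeta \<omega>) (int x) < Suc N} \<le> e" by simp
  qed
  moreover have "a' \<ge> 1" unfolding a'_def by auto
  ultimately show "\<exists>a\<ge>1. \<forall>x\<ge>a. prob {\<omega>\<in>space M. kchoice_Lambda k (zeta \<omega>) (int x) < Suc N} \<le> e"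
    by blast
qed

lemma Q_all: "Q N"
  by (induction N) (auto intro: Q0 Qstep)

end


lemma (in prob_space) AE_by_eps:
  assumes Q: "AE \<omega> in M. Q \<omega>"
    and B: "\<And>e. e > 0 \<Longrightarrow> \<exists>B\<in>sets M. prob B \<le> e \<and> (\<forall>\<omega>\<in>space M. Q \<omega> \<longrightarrow> \<omega> \<notin> B \<longrightarrow> P \<omega>)"
  shows "AE \<omega> in M. P \<omega>"
proof -
  have "\<forall>j. \<exists>B\<in>sets M. prob B \<le> 1 / real (Suc j) \<and> (\<forall>\<omega>\<in>space M. Q \<omega> \<longrightarrow> \<omega> \<notin> B \<longrightarrow> P \<omega>)"
    using B by simp
  then obtain Bf where Bf: "\<And>j. Bf j \<in> sets M" "\<And>j. prob (Bf j) \<le> 1 / real (Suc j)"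
    "\<And>j \<omega>. \<omega> \<in> space M \<Longrightarrow> Q \<omega> \<Longrightarrow> \<omega> \<notin> Bf j \<Longrightarrow> P \<omega>"
    by metis
  define C where "C = (\<Inter>j. Bf j)"
  have sC: "C \<in> sets M" unfolding C_def using Bf(1) by auto
  have pC: "prob C \<le> 1 / real (Suc j)" for j
  proof -
    have "prob C \<le> prob (Bf j)" unfolding C_def using Bf(1) by (intro finite_measure_mono) auto
    then show ?thesis using Bf(2)[of j] by linarith
  qed
  have "prob C \<le> 0"
  proof (rule ccontr)
    assume "\<not> prob C \<le> 0"
    then obtain n where n: "n > 0" "inverse (real n) < prob C" using ex_inverse_of_nat_less[of "prob C"] by auto
    then obtain j where "n = Suc j" by (cases n) auto
    then show False using pC[of j] n by (simp add: inverse_eq_divide)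
  qed
  then have "emeasure M C = 0" using sC by (simp add: emeasure_eq_measure measure_nonneg antisym)
  then have nC: "AE \<omega> in M. \<omega> \<notin> C" using sC by (intro AE_I'[of C]) auto
  show ?thesis using AE_space nC Q
  proof (eventually_elim)
    case (elim \<omega>)
    then obtain j where "\<omega> \<notin> Bf j" unfolding C_def by auto
    then show ?case using Bf(3)[of \<omega> j] elim by auto
  qed
qed

context kc2 begin

lemma ev_ge: "AE \<omega> in M. \<exists>n0. \<forall>n\<ge>n0. kchoice_Lambda k (zeta \<omega>) (int n) \<ge> N"
proof (rule AE_by_eps[OF pos_AE])
  fix e :: real assume e: "e > 0"
  obtain L where L0: "\<forall>G\<ge>L. (\<Sum>j. qS (j + G)) < e / 2"
    using tail_small[OF summable_qS, of "e/2"] e by auto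
  have L: "(\<Sum>j. qS (j + (L + 2))) < e / 2" using L0[rule_format, of "L + 2"] by (simp only: le_add1)
  define e' where "e' = e / (2 * (real L + 1))"
  have e'0: "e' > 0" unfolding e'_def using e by auto
  obtain a where a: "a \<ge> 1" "\<forall>x\<ge>a. prob {\<omega>\<in>space M. kchoice_Lambda k (zeta \<omega>) (int x) < N} \<le> e'"
    using Q_all[of N] e'0 unfolding Q_def by blast
  let ?CF = "\<lambda>m. {\<omega>\<in>space M. CF a L m (zeta \<omega>)}"
  let ?C = "(\<Union>m. ?CF m)"
  let ?U = "(\<Union>y\<in>{a..a+L}. {\<omega>\<in>space M. kchoice_Lambda k (zeta \<omega>) (int y) < N})"
  have sC: "?C \<in> sets M" using sets_CF by auto
  have sU: "?U \<in> sets M" using sets_Lam by auto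
  have pC: "prob ?C \<le> e / 2"
  proof -
    have "(\<lambda>m. prob (?CF m)) \<longlonglongrightarrow> prob ?C"
    proof (rule finite_Lim_measure_incseq)
      show "range ?CF \<subseteq> sets M" using sets_CF by auto
      show "incseq ?CF" unfolding incseq_def using CF_mono by auto
    qed
    moreover have "\<forall>m. prob (?CF m) \<le> e / 2" using prob_CF[of a L] L by (meson less_imp_le order_trans)
    ultimately show ?thesis by (intro LIMSEQ_le_const2) auto
  qed
  have pU: "prob ?U \<le> e / 2"
  proof -
    have "prob ?U \<le> (\<Sum>y\<in>{a..a+L}. prob {\<omega>\<in>space M. kchoice_Lambda k (zeta \<omega>) (int y) < N})"
      using sets_Lam by (intro measure_UNION_le) auto
    also have "\<dots> \<le> (\<Sum>y\<in>{a..a+L}. e')" using a by (intro sum_mono) auto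
    also have "\<dots> = (real L + 1) * e'" by simp
    also have "\<dots> = e / 2" unfolding e'_def by (simp add: field_simps)
    finally show ?thesis .
  qed
  show "\<exists>B\<in>sets M. prob B \<le> e \<and> (\<forall>\<omega>\<in>space M. (\<forall>i<k. \<forall>n\<ge>1. 1 \<le> Zs i n \<omega>) \<longrightarrow> \<omega> \<notin> B \<longrightarrow>
          (\<exists>n0. \<forall>n\<ge>n0. N \<le> kchoice_Lambda k (zeta \<omega>) (int n)))"
  proof (intro bexI[of _ "?C \<union> ?U"] conjI ballI impI)
    show "?C \<union> ?U \<in> sets M" using sC sU by auto
    have "prob (?C \<union> ?U) \<le> prob ?C + prob ?U" using sC sU by (rule measure_Un_le)
    then show "prob (?C \<union> ?U) \<le> e" using pC pU by linarith
  next
    fix \<omega> assume om: "\<omega> \<in> space M" and pz: "\<forall>i<k. \<forall>n\<ge>1. 1 \<le> Zs i n \<omega>" and nB: "\<omega> \<notin> ?C \<union> ?U"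
    have "N \<le> kchoice_Lambda k (zeta \<omega>) (int n)" if n: "n \<ge> a" for n
    proof -
      have nCF: "\<not> CF a L n (zeta \<omega>)" using nB om by auto
      have pos: "\<forall>i<k. \<forall>y. 1 \<le> y \<and> y \<le> n \<longrightarrow> zeta \<omega> i y \<ge> 1" using pz by (auto simp: zeta_def)
      obtain x where x: "a \<le> x" "x \<le> a + L" "int x \<in> kchoice_tree k (zeta \<omega>) (int n)"
        using cover_Lam[OF a(1) pos nCF n] by blast
      have "N \<le> kchoice_Lambda k (zeta \<omega>) (int x)" using nB om x by (auto simp: not_less)
      also have "\<dots> \<le> kchoice_Lambda k (zeta \<omega>) (int n)" by (rule Lambda_mono[OF x(3)])
      finally show ?thesis .
    qed
    then show "\<exists>n0. \<forall>n\<ge>n0. N \<le> kchoice_Lambda k (zeta \<omega>) (int n)" by blast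
  qed
qed

lemma main_AE: "AE \<omega> in M. filterlim (\<lambda>n::nat. kchoice_Lambda k (\<lambda>i m. Zs i m \<omega>) (int n)) at_top sequentially"
proof -
  have "AE \<omega> in M. \<forall>N. \<exists>n0. \<forall>n\<ge>n0. kchoice_Lambda k (zeta \<omega>) (int n) \<ge> N"
    using ev_ge by (simp add: AE_all_countable)
  then show ?thesis
  proof eventually_elim
    case (elim \<omega>)
    show ?case unfolding filterlim_at_top eventually_sequentially
      using elim by (simp add: zeta_def)
  qed
qed

end

theorem mainTheorem13:
  fixes M :: "'a measure" and p :: "nat pmf" and k :: nat
    and Zs :: "nat \<Rightarrow> nat \<Rightarrow> 'a \<Rightarrow> nat"
  assumes "prob_space M"
    and "k \<ge> 2"
    and support_pos: "0 \<notin> set_pmf p"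
    and aperiodic: "Gcd (set_pmf p) = 1"
    and indep: "prob_space.indep_vars M (\<lambda>_. count_space UNIV) (\<lambda>(i, n). Zs i n) ({..<k} \<times> {1..})"
    and distr: "\<And>i n. i < k \<Longrightarrow> n \<ge> 1 \<Longrightarrow> distr M (count_space UNIV) (Zs i n) = measure_pmf p"
    and infinite_mean: "(\<integral>\<^sup>+ x. ennreal (real x) \<partial>measure_pmf p) = \<infinity>"
    and finite_min_mean: "(\<integral>\<^sup>+ \<omega>. ennreal (real (Min ((\<lambda>i. Zs i 1 \<omega>) ` {..<k}))) \<partial>M) < \<infinity>"
  shows "AE \<omega> in M. filterlim (\<lambda>n::nat. kchoice_Lambda k (\<lambda>i m. Zs i m \<omega>) (int n)) at_top sequentially"
proof -
  interpret kc2 M k p Zs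
    using assms by (simp add: kc2_def kc_def kc_axioms_def kc2_axioms_def)
  show ?thesis by (rule main_AE)
qed


end
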